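(* Let $f^*(\mathbf x)=f_1(x_1)+f_2(x_2)+\cdots+f_m(x_m)$ for non-constant univariate functions $f_1,\dots,f_m$ on $\{1,\dots,B\}$, with $m\le d$. Then for any $l<m$ we have $\dim_l(f^* )>\dim_m(f^* )$, while for any $l\ge m$ we have $$\dim_l(f^* )=\dim_m(f^* )=\sum_{i=1}^m\dim_1(f_i)-m+1.$$
   Context: $\mathcal X=\{1,\dots,B\}^d$ with a full-support probability measure $\nu$. A tree structure is a finite rooted binary tree with axis-aligned splitting rules $(v,t)$ at internal nodes (children $\{x_v\le t\}$, $\{x_v>t\}$ of the parent's cell, both nonempty); its leaves partition $\mathcal X$. For $l\ge1$, $\Omega_{\mathrm{TSE},l}$ is the set of $l$-tuples of tree structures (TSEs). For a TSE $\mathfrak E$, $\mathcal F(\mathfrak E)$ is the linear span (in $L^2(\nu)$) of the indicator functions of all leaves of all its trees and $\mathrm{df}(\mathfrak E)=\dim\mathcal F(\mathfrak E)$. For $f:\mathcal X\to\mathbb R$, $\dim_l(f)=\min\{\mathrm{df}(\mathfrak E):\mathfrak E\in\Omega_{\mathrm{TSE},l},\ f\in\mathcal F(\mathfrak E)\}$. For a univariate $f_i$, $\dim_1(f_i)$ means $\dim_1$ of $\mathbf x\mapsto f_i(x_i)$ (equal to the number of maximal constant pieces of $f_i$). *)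

theory Defs
  imports "HOL-Analysis.Analysis" "HOL-Library.Function_Algebras"
begin

text \<open>Points of the grid X = {1..B}^d are represented as functions nat => nat
  whose coordinates 1..d lie in {1..B} and which are 0 outside {1..d}.\<close>

definition grid :: "nat \<Rightarrow> nat \<Rightarrow> (nat \<Rightarrow> nat) set" where
  "grid d B = {x. (\<forall>i\<in>{1..d}. x i \<in> {1..B}) \<and> (\<forall>i. i \<notin> {1..d} \<longrightarrow> x i = 0)}"

text \<open>Tree structures: Node v t L R splits a cell C into {x in C. x v <= t}
  (left child L) and {x in C. x v > t} (right child R).\<close>

datatype tree = Leaf | Node nat nat tree tree

fun valid_tree :: "nat \<Rightarrow> (nat \<Rightarrow> nat) set \<Rightarrow> tree \<Rightarrow> bool" where
  "valid_tree d C Leaf = True"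
| "valid_tree d C (Node v t L R) =
     (v \<in> {1..d} \<and> {x\<in>C. x v \<le> t} \<noteq> {} \<and> {x\<in>C. x v > t} \<noteq> {} \<and>
      valid_tree d {x\<in>C. x v \<le> t} L \<and> valid_tree d {x\<in>C. x v > t} R)"

fun leaves :: "(nat \<Rightarrow> nat) set \<Rightarrow> tree \<Rightarrow> (nat \<Rightarrow> nat) set set" where
  "leaves C Leaf = {C}"
| "leaves C (Node v t L R) = leaves {x\<in>C. x v \<le> t} L \<union> leaves {x\<in>C. x v > t} R"

definition TSE :: "nat \<Rightarrow> nat \<Rightarrow> nat \<Rightarrow> tree list set" where
  "TSE d B l = {E. length E = l \<and> (\<forall>T\<in>set E. valid_tree d (grid d B) T)}"

definition fscale :: "real \<Rightarrow> ((nat \<Rightarrow> nat) \<Rightarrow> real) \<Rightarrow> ((nat \<Rightarrow> nat) \<Rightarrow> real)" where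
  "fscale c g = (\<lambda>x. c * g x)"

definition Fspace :: "nat \<Rightarrow> nat \<Rightarrow> tree list \<Rightarrow> ((nat \<Rightarrow> nat) \<Rightarrow> real) set" where
  "Fspace d B E = module.span fscale
     ((\<lambda>A. indicator A) ` (\<Union>T\<in>set E. leaves (grid d B) T))"

definition df :: "nat \<Rightarrow> nat \<Rightarrow> tree list \<Rightarrow> nat" where
  "df d B E = vector_space.dim fscale (Fspace d B E)"

text \<open>A function on X is identified with its restriction (0 outside X).\<close>

definition dimL :: "nat \<Rightarrow> nat \<Rightarrow> nat \<Rightarrow> ((nat \<Rightarrow> nat) \<Rightarrow> real) \<Rightarrow> nat" where
  "dimL d B l f = (LEAST n. \<exists>E\<in>TSE d B l.
      (\<lambda>x. if x \<in> grid d B then f x else 0) \<in> Fspace d B E \<and> df d B E = n)"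

end

theory Submission
  imports Defs
begin


interpretation fsv: vector_space fscale
  by unfold_locales (auto simp: fscale_def fun_eq_iff algebra_simps)

lemma sum_fun_apply: "(sum f A) x = (\<Sum>a\<in>A. f a x)"
  by (induct A rule: infinite_finite_induct) auto

lemma fscale_apply: "fscale c g x = c * g x" by (simp add: fscale_def)

definition cellOf :: "(nat \<Rightarrow> nat) set \<Rightarrow> (nat \<times> nat \<times> bool) list \<Rightarrow> (nat \<Rightarrow> nat) set" where
  "cellOf C a = {x\<in>C. \<forall>(v,t,s)\<in>set a. (x v \<le> t) = s}"

fun nodes :: "(nat \<Rightarrow> nat) set \<Rightarrow> tree \<Rightarrow> ((nat \<times> nat \<times> bool) list \<times> nat \<times> nat) set" where
  "nodes C Leaf = {}"
| "nodes C (Node v t L R) = insert ([], v, t)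
     ((\<lambda>(a,w,c). ((v,t,True)#a, w, c)) ` nodes {x\<in>C. x v \<le> t} L \<union>
      (\<lambda>(a,w,c). ((v,t,False)#a, w, c)) ` nodes {x\<in>C. x v > t} R)"

lemma finite_nodes: "finite (nodes C T)"
  by (induct T arbitrary: C) auto

lemma finite_leaves: "finite (leaves C T)"
  by (induct T arbitrary: C) auto

lemma leaves_sub: "L \<in> leaves C T \<Longrightarrow> L \<subseteq> C"
  by (induct T arbitrary: C) force+

lemma cellOf_Nil[simp]: "cellOf C [] = C" by (simp add: cellOf_def)

lemma cellOf_Cons: "cellOf C ((v,t,s)#a) = cellOf {x\<in>C. (x v \<le> t) = s} a"
  by (auto simp: cellOf_def)

lemma ind_span_leaves: "indicator C \<in> fsv.span ((\<lambda>A. indicator A) ` leaves C T)"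
proof (induct T arbitrary: C)
  case Leaf then show ?case by (auto intro: fsv.span_base)
next
  case (Node v t L R)
  have eq: "(indicator C :: _ \<Rightarrow> real) = indicator {x\<in>C. x v \<le> t} + indicator {x\<in>C. x v > t}"
    by (auto simp: fun_eq_iff indicator_def)
  have "indicator {x\<in>C. x v \<le> t} \<in> fsv.span ((\<lambda>A. indicator A) ` leaves C (Node v t L R))"
    using Node(1)[of "{x\<in>C. x v \<le> t}"] fsv.span_mono[of "(\<lambda>A. indicator A) ` leaves {x\<in>C. x v \<le> t} L" "(\<lambda>A. indicator A) ` leaves C (Node v t L R)"] by auto
  moreover have "indicator {x\<in>C. x v > t} \<in> fsv.span ((\<lambda>A. indicator A) ` leaves C (Node v t L R))"
    using Node(2)[of "{x\<in>C. x v > t}"] fsv.span_mono[of "(\<lambda>A. indicator A) ` leaves {x\<in>C. x v > t} R" "(\<lambda>A. indicator A) ` leaves C (Node v t L R)"] by auto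
  ultimately show ?case unfolding eq by (rule fsv.span_add)
qed

lemma node_left_span:
  "(a,v,t) \<in> nodes C T \<Longrightarrow> indicator {x\<in>cellOf C a. x v \<le> t} \<in> fsv.span ((\<lambda>A. indicator A) ` leaves C T)"
proof (induct T arbitrary: C a)
  case Leaf then show ?case by simp
next
  case (Node v0 t0 L R)
  let ?S = "fsv.span ((\<lambda>A. indicator A) ` leaves C (Node v0 t0 L R))"
  have subL: "fsv.span ((\<lambda>A. indicator A) ` leaves {x\<in>C. x v0 \<le> t0} L) \<subseteq> ?S"
    by (rule fsv.span_mono) auto
  have subR: "fsv.span ((\<lambda>A. indicator A) ` leaves {x\<in>C. x v0 > t0} R) \<subseteq> ?S"
    by (rule fsv.span_mono) auto
  from Node(3) consider "a = []" "v = v0" "t = t0"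
    | a' where "a = (v0,t0,True)#a'" "(a',v,t) \<in> nodes {x\<in>C. x v0 \<le> t0} L"
    | a' where "a = (v0,t0,False)#a'" "(a',v,t) \<in> nodes {x\<in>C. x v0 > t0} R"
    by auto
  then show ?case
  proof cases
    case 1
    then show ?thesis using ind_span_leaves[of "{x\<in>C. x v0 \<le> t0}" L] subL by (auto simp del: leaves.simps)
  next
    case 2
    have "cellOf C a = cellOf {x\<in>C. x v0 \<le> t0} a'" using 2 by (simp add: cellOf_Cons)
    then show ?thesis using Node(1)[OF 2(2)] subL by auto
  next
    case 3
    have "cellOf C a = cellOf {x\<in>C. x v0 > t0} a'" using 3 by (auto simp: cellOf_Cons not_le)
    then show ?thesis using Node(2)[OF 3(2)] subR by auto
  qed
qed



definition cc :: "(nat \<Rightarrow> nat) set \<Rightarrow> bool" where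
  "cc C \<longleftrightarrow> (\<forall>x\<in>C. \<forall>x'\<in>C. \<forall>v c. x v \<le> c \<and> c \<le> x' v \<longrightarrow> x(v:=c) \<in> C)"

lemma cc_grid: "cc (grid d B)"
  unfolding cc_def
proof (intro ballI allI impI)
  fix x x' v c assume x: "x \<in> grid d B" "x' \<in> grid d B" and c: "x v \<le> c \<and> c \<le> x' v"
  show "x(v:=c) \<in> grid d B"
  proof (cases "v \<in> {1..d}")
    case True
    have b1: "1 \<le> x v" "x' v \<le> B" using x True unfolding grid_def by auto
    have c1: "1 \<le> c" "c \<le> B" using b1 c by linarith+
    have "x(v:=c) \<in> {x. (\<forall>i\<in>{1..d}. x i \<in> {1..B}) \<and> (\<forall>i. i \<notin> {1..d} \<longrightarrow> x i = 0)}"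
      using x c1 True unfolding grid_def by auto
    then show ?thesis unfolding grid_def .
  next
    case False
    then have "x v = 0" "x' v = 0" using x unfolding grid_def by auto
    then have "x(v:=c) = x" using c by auto
    then show ?thesis using x by simp
  qed
qed

lemma cc_le: "cc C \<Longrightarrow> cc {x\<in>C. x v \<le> t}"
  unfolding cc_def by (metis (no_types, lifting) fun_upd_other fun_upd_same mem_Collect_eq order.trans)

lemma cc_gt: "cc C \<Longrightarrow> cc {x\<in>C. x v > t}"
  unfolding cc_def by (metis (no_types, lifting) fun_upd_other fun_upd_same mem_Collect_eq order.strict_trans2)

lemma cc_cellOf: "cc C \<Longrightarrow> cc (cellOf C a)"
proof (induct a arbitrary: C)
  case Nil then show ?case by simp
next
  case (Cons e a)
  obtain v t s where e: "e = (v,t,s)" by (cases e) auto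
  show ?case
  proof (cases s)
    case True
    have "{x\<in>C. (x v \<le> t) = s} = {x\<in>C. x v \<le> t}" using True by auto
    then show ?thesis using Cons cc_le[OF Cons(2)] by (simp add: e cellOf_Cons)
  next
    case False
    have "{x\<in>C. (x v \<le> t) = s} = {x\<in>C. x v > t}" using False by auto
    then show ?thesis using Cons cc_gt[OF Cons(2)] by (simp add: e cellOf_Cons)
  qed
qed

lemma node_props:
  assumes "valid_tree d C T" "(a,v,t) \<in> nodes C T" "C \<subseteq> grid d B" "cc C"
  shows "v \<in> {1..d} \<and> 1 \<le> t \<and> t < B \<and> (\<exists>z\<in>cellOf C a. z v = t \<and> z(v:=Suc t) \<in> cellOf C a)"
  using assms
proof (induct T arbitrary: C a)
  case Leaf then show ?case by simp
next
  case (Node v0 t0 L R)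
  from Node(4) consider "a = []" "v = v0" "t = t0"
    | a' where "a = (v0,t0,True)#a'" "(a',v,t) \<in> nodes {x\<in>C. x v0 \<le> t0} L"
    | a' where "a = (v0,t0,False)#a'" "(a',v,t) \<in> nodes {x\<in>C. x v0 > t0} R"
    by auto
  then show ?case
  proof cases
    case 1
    from Node(3) obtain x x' where x: "x \<in> C" "x v0 \<le> t0" and x': "x' \<in> C" "x' v0 > t0"
      and v0: "v0 \<in> {1..d}" by auto
    have z1: "x(v0:=t0) \<in> C" using Node(6) x x' unfolding cc_def by auto
    have z2: "x(v0:=Suc t0) \<in> C" using Node(6) x x' unfolding cc_def by auto
    have "x(v0:=t0) \<in> grid d B" using z1 Node(5) by auto
    then have "1 \<le> t0" using v0 unfolding grid_def by force
    moreover have "x' v0 \<le> B" using x' Node(5) v0 unfolding grid_def by auto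
    moreover have "(x(v0:=t0))(v0:=Suc t0) \<in> C" using z2 by simp
    ultimately show ?thesis using 1 v0 z1 x' by (intro conjI) (auto simp del: fun_upd_apply simp add: fun_upd_same intro!: bexI[of _ "x(v0:=t0)"])
  next
    case 2
    have c: "cellOf C a = cellOf {x\<in>C. x v0 \<le> t0} a'" using 2 by (simp add: cellOf_Cons)
    show ?thesis unfolding c
      by (rule Node(1)) (use Node(3,5,6) 2 cc_le in auto)
  next
    case 3
    have c: "cellOf C a = cellOf {x\<in>C. x v0 > t0} a'" using 3 by (auto simp: cellOf_Cons not_le)
    show ?thesis unfolding c
      by (rule Node(2)) (use Node(3,5,6) 3 cc_gt in auto)
  qed
qed

lemma node_anc:
  assumes "(a,v,t) \<in> nodes C T" "i < length a"
  shows "(take i a, fst (a!i), fst (snd (a!i))) \<in> nodes C T"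
  using assms
proof (induct T arbitrary: C a i)
  case Leaf then show ?case by simp
next
  case (Node v0 t0 L R)
  from Node(3) consider "a = []" "v = v0" "t = t0"
    | a' where "a = (v0,t0,True)#a'" "(a',v,t) \<in> nodes {x\<in>C. x v0 \<le> t0} L"
    | a' where "a = (v0,t0,False)#a'" "(a',v,t) \<in> nodes {x\<in>C. x v0 > t0} R"
    by auto
  then show ?case
  proof cases
    case 1 then show ?thesis using Node(4) by simp
  next
    case 2
    show ?thesis
    proof (cases i)
      case 0 then show ?thesis using 2 by simp
    next
      case (Suc i')
      have "(take i' a', fst (a'!i'), fst (snd (a'!i'))) \<in> nodes {x\<in>C. x v0 \<le> t0} L"
        using Node(1)[OF 2(2)] Node(4) 2 Suc by auto
      then show ?thesis using 2 Suc by force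
    qed
  next
    case 3
    show ?thesis
    proof (cases i)
      case 0 then show ?thesis using 3 by simp
    next
      case (Suc i')
      have "(take i' a', fst (a'!i'), fst (snd (a'!i'))) \<in> nodes {x\<in>C. x v0 > t0} R"
        using Node(2)[OF 3(2)] Node(4) 3 Suc by auto
      then show ?thesis using 3 Suc by force
    qed
  qed
qed

lemma covering:
  assumes "L \<in> leaves C T" "y \<in> C" "y(w:=Suc c) \<in> C" "y w = c"
    "indicator L y \<noteq> (indicator L (y(w:=Suc c)) :: real)"
  shows "\<exists>a. (a,w,c) \<in> nodes C T \<and> y \<in> cellOf C a \<and> y(w:=Suc c) \<in> cellOf C a"
  using assms
proof (induct T arbitrary: C L)
  case Leaf then show ?case by (auto simp: indicator_def)
next
  case (Node v t Lt Rt)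
  let ?y' = "y(w:=Suc c)"
  show ?case
  proof (cases "(y v \<le> t) = (?y' v \<le> t)")
    case True
    show ?thesis
    proof (cases "y v \<le> t")
      case yl: True
      have "?y' \<in> C" by (rule Node(5))
      then have inl: "y \<in> {x\<in>C. x v \<le> t}" "?y' \<in> {x\<in>C. x v \<le> t}" using True yl Node(4) by auto
      have "L \<notin> leaves {x\<in>C. x v > t} Rt"
      proof
        assume "L \<in> leaves {x\<in>C. x v > t} Rt"
        then have "L \<subseteq> {x\<in>C. x v > t}" by (rule leaves_sub)
        then have "y \<notin> L" "?y' \<notin> L" using inl by auto
        then have "indicator L y = (indicator L ?y' :: real)" by (simp add: indicator_def del: fun_upd_apply)
        then show False using Node(7) by blast
      qed
      then have "L \<in> leaves {x\<in>C. x v \<le> t} Lt" using Node(3) by auto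
      from Node(1)[OF this inl Node(6,7)] obtain a where
        "(a,w,c) \<in> nodes {x\<in>C. x v \<le> t} Lt" "y \<in> cellOf {x\<in>C. x v \<le> t} a" "?y' \<in> cellOf {x\<in>C. x v \<le> t} a"
        by blast
      then show ?thesis
        by (intro exI[of _ "(v,t,True)#a"]) (auto simp: cellOf_Cons simp del: fun_upd_apply)
    next
      case yr: False
      have "?y' \<in> C" by (rule Node(5))
      then have inr: "y \<in> {x\<in>C. x v > t}" "?y' \<in> {x\<in>C. x v > t}" using True yr Node(4) by auto
      have "L \<notin> leaves {x\<in>C. x v \<le> t} Lt"
      proof
        assume "L \<in> leaves {x\<in>C. x v \<le> t} Lt"
        then have "L \<subseteq> {x\<in>C. x v \<le> t}" by (rule leaves_sub)
        then have "y \<notin> L" "?y' \<notin> L" using inr by auto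
        then have "indicator L y = (indicator L ?y' :: real)" by (simp add: indicator_def del: fun_upd_apply)
        then show False using Node(7) by blast
      qed
      then have "L \<in> leaves {x\<in>C. x v > t} Rt" using Node(3) by auto
      from Node(2)[OF this inr Node(6,7)] obtain a where
        "(a,w,c) \<in> nodes {x\<in>C. x v > t} Rt" "y \<in> cellOf {x\<in>C. x v > t} a" "?y' \<in> cellOf {x\<in>C. x v > t} a"
        by blast
      then show ?thesis
        by (intro exI[of _ "(v,t,False)#a"]) (auto simp: cellOf_Cons not_le simp del: fun_upd_apply)
    qed
  next
    case False
    then have "v = w" by (cases "v = w") auto
    then have "t = c" using False Node(6) by auto
    then show ?thesis using \<open>v = w\<close> Node(4,5) by (intro exI[of _ "[]"]) auto
  qed
qed

lemma cellOf_jump: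
  assumes "y w = c" "(w,c) \<notin> (\<lambda>(v,t,s). (v,t)) ` set a" "(y \<in> C) = (y(w:=Suc c) \<in> C)"
  shows "(y \<in> cellOf C a) = (y(w:=Suc c) \<in> cellOf C a)"
proof -
  have "\<forall>(v,t,s)\<in>set a. (y v \<le> t) = ((y(w:=Suc c)) v \<le> t)"
  proof (clarify)
    fix v t s assume vt: "(v,t,s) \<in> set a"
    show "(y v \<le> t) = ((y(w:=Suc c)) v \<le> t)"
    proof (cases "v = w")
      case True
      then have "t \<noteq> c" using vt assms(2) by force
      then show ?thesis using True assms(1) by auto
    qed simp
  qed
  then show ?thesis using assms(3) unfolding cellOf_def by fastforce
qed



definition loc :: "nat \<Rightarrow> nat \<Rightarrow> nat \<Rightarrow> nat \<Rightarrow> (nat \<Rightarrow> nat) \<Rightarrow> bool" where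
  "loc d B w c y \<longleftrightarrow> y \<in> grid d B \<and> y w = c \<and> y(w:=Suc c) \<in> grid d B"

definition Zs :: "nat \<Rightarrow> nat \<Rightarrow> (nat \<times> nat \<times> (nat \<Rightarrow> nat)) set \<Rightarrow> ((nat \<Rightarrow> nat) \<Rightarrow> real) set" where
  "Zs d B Q = {g. \<forall>w c y. loc d B w c y \<and> (w,c,y) \<notin> Q \<longrightarrow> g y = g (y(w:=Suc c))}"

definition QP :: "(nat \<times> nat) set \<Rightarrow> (nat \<times> nat \<times> (nat \<Rightarrow> nat)) set" where
  "QP P = {(w,c,y). (w,c) \<in> P}"

definition Inv :: "nat \<Rightarrow> nat \<Rightarrow> tree list \<Rightarrow> (nat \<times> nat \<times> (nat \<Rightarrow> nat)) set \<Rightarrow> nat \<Rightarrow> bool" where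
  "Inv d B E Q n \<longleftrightarrow> (\<exists>A. finite A \<and> card A = n \<and> A \<subseteq> Fspace d B E \<and> A \<subseteq> Zs d B Q \<and> fsv.independent A)"

definition splits :: "(nat \<times> nat \<times> bool) list \<Rightarrow> (nat \<times> nat) set" where
  "splits a = (\<lambda>(v,t,s). (v,t)) ` set a"

definition hnode :: "nat \<Rightarrow> nat \<Rightarrow> (nat \<times> nat \<times> bool) list \<Rightarrow> nat \<Rightarrow> nat \<Rightarrow> (nat \<Rightarrow> nat) \<Rightarrow> real" where
  "hnode d B a v t = indicator {x\<in>cellOf (grid d B) a. x v \<le> t}"

definition allnodes :: "nat \<Rightarrow> nat \<Rightarrow> tree list \<Rightarrow> (tree \<times> (nat \<times> nat \<times> bool) list \<times> nat \<times> nat) set" where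
  "allnodes d B E = {(T,a,v,t). T \<in> set E \<and> (a,v,t) \<in> nodes (grid d B) T}"

lemma Zs_subspace: "fsv.subspace (Zs d B Q)"
  unfolding fsv.subspace_def Zs_def by (auto simp: fscale_def)

lemma Zs_mono: "Q \<subseteq> Q' \<Longrightarrow> Zs d B Q \<subseteq> Zs d B Q'"
  unfolding Zs_def by blast

lemma inv_step:
  assumes "Inv d B E Q n" "Q \<subseteq> Q'" "h \<in> Fspace d B E" "h \<in> Zs d B Q'" "h \<notin> Zs d B Q"
  shows "Inv d B E Q' (Suc n)"
proof -
  obtain A where A: "finite A" "card A = n" "A \<subseteq> Fspace d B E" "A \<subseteq> Zs d B Q" "fsv.independent A"
    using assms(1) unfolding Inv_def by blast
  have "fsv.span A \<subseteq> Zs d B Q" using fsv.span_minimal[OF A(4) Zs_subspace] .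
  then have hA: "h \<notin> fsv.span A" "h \<notin> A" using assms(5) fsv.span_base[of h A] by auto
  have "fsv.independent (insert h A)" using A(5) hA by (simp add: fsv.independent_insert)
  moreover have "insert h A \<subseteq> Zs d B Q'" using A(4) Zs_mono[OF assms(2)] assms(4) by auto
  ultimately show ?thesis unfolding Inv_def
    using A hA assms(3) by (intro exI[of _ "insert h A"]) auto
qed

lemma finite_W: "finite ((\<lambda>A. indicator A) ` (\<Union>T\<in>set E. leaves C T))"
  using finite_leaves by auto

lemma inv_dim:
  assumes "Inv d B E Q n" shows "n \<le> df d B E"
proof -
  obtain A where A: "finite A" "card A = n" "A \<subseteq> Fspace d B E" "fsv.independent A"
    using assms unfolding Inv_def by blast
  obtain B0 where B0: "B0 \<subseteq> Fspace d B E" "fsv.independent B0" "Fspace d B E \<subseteq> fsv.span B0"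
    "card B0 = fsv.dim (Fspace d B E)" by (rule fsv.basis_exists)
  have "finite B0" using fsv.independent_span_bound[OF finite_W B0(2)] B0(1) unfolding Fspace_def by blast
  then have "card A \<le> card B0" using fsv.independent_span_bound[OF _ A(4)] A(3) B0(3) by blast
  then show ?thesis using A B0 unfolding df_def by simp
qed

lemma hnode_in_F:
  assumes "(T,a,v,t) \<in> allnodes d B E" shows "hnode d B a v t \<in> Fspace d B E"
proof -
  have "T \<in> set E" "(a,v,t) \<in> nodes (grid d B) T" using assms unfolding allnodes_def by auto
  moreover have "fsv.span ((\<lambda>A. indicator A) ` leaves (grid d B) T) \<subseteq> Fspace d B E"
    unfolding Fspace_def by (rule fsv.span_mono) (use \<open>T \<in> set E\<close> in auto)
  ultimately show ?thesis using node_left_span unfolding hnode_def by blast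
qed

lemma node_props':
  assumes "(T,a,v,t) \<in> allnodes d B E" "\<forall>T\<in>set E. valid_tree d (grid d B) T"
  shows "v \<in> {1..d} \<and> 1 \<le> t \<and> t < B \<and> (\<exists>z\<in>cellOf (grid d B) a. z v = t \<and> z(v:=Suc t) \<in> cellOf (grid d B) a)"
  using assms node_props[of d "grid d B" T a v t B] cc_grid unfolding allnodes_def by auto

lemma cellOf_sub: "cellOf C a \<subseteq> C" unfolding cellOf_def by auto

lemma node_nrep:
  assumes "(T,a,v,t) \<in> allnodes d B E" "\<forall>T\<in>set E. valid_tree d (grid d B) T"
  shows "(v,t) \<notin> splits a"
proof
  assume "(v,t) \<in> splits a"
  then obtain s where s: "(v,t,s) \<in> set a" unfolding splits_def by auto
  obtain z where z: "z \<in> cellOf (grid d B) a" "z v = t" "z(v:=Suc t) \<in> cellOf (grid d B) a"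
    using node_props'[OF assms] by blast
  have "(z v \<le> t) = s" using z(1) s unfolding cellOf_def by auto
  moreover have "((z(v:=Suc t)) v \<le> t) = s" using z(3) s unfolding cellOf_def by blast
  ultimately show False using z(2) by simp
qed

lemma hnode_Z:
  assumes "splits a \<subseteq> P" "QP P \<subseteq> Q" "(v,t) \<notin> splits a"
    "\<forall>y. loc d B v t y \<and> (v,t,y) \<notin> Q \<longrightarrow> y \<notin> cellOf (grid d B) a"
  shows "hnode d B a v t \<in> Zs d B Q"
  unfolding Zs_def
proof (intro CollectI allI impI)
  fix w c y assume wcy: "loc d B w c y \<and> (w,c,y) \<notin> Q"
  let ?y' = "y(w:=Suc c)"
  have l: "y \<in> grid d B" "y w = c" "?y' \<in> grid d B" using wcy unfolding loc_def by auto
  have wc: "(w,c) \<notin> P" using wcy assms(2) unfolding QP_def by auto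
  have eqset: "{x\<in>cellOf (grid d B) a. x v \<le> t} = cellOf (grid d B) ((v,t,True)#a)"
    by (auto simp: cellOf_def)
  show "hnode d B a v t y = hnode d B a v t ?y'"
  proof (cases "(w,c) = (v,t)")
    case True
    have "y \<notin> cellOf (grid d B) a" using assms(4) wcy True by auto
    moreover have "(y \<in> cellOf (grid d B) a) = (?y' \<in> cellOf (grid d B) a)"
      by (rule cellOf_jump) (use l True assms(3) in \<open>auto simp: splits_def\<close>)
    ultimately show ?thesis unfolding hnode_def by (simp add: indicator_def)
  next
    case False
    have "(w,c) \<notin> (\<lambda>(v,t,s). (v,t)) ` set ((v,t,True)#a)"
      using False wc assms(1) unfolding splits_def by auto
    then have "(y \<in> cellOf (grid d B) ((v,t,True)#a)) = (?y' \<in> cellOf (grid d B) ((v,t,True)#a))"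
      by (intro cellOf_jump) (use l in auto)
    then show ?thesis unfolding hnode_def eqset by (simp add: indicator_def)
  qed
qed

lemma hnode_notZ:
  assumes "(T,a,v,t) \<in> allnodes d B E" "\<forall>T\<in>set E. valid_tree d (grid d B) T"
    "z \<in> cellOf (grid d B) a" "z v = t" "z(v:=Suc t) \<in> cellOf (grid d B) a" "(v,t,z) \<notin> Q"
  shows "hnode d B a v t \<notin> Zs d B Q"
proof
  assume "hnode d B a v t \<in> Zs d B Q"
  moreover have "loc d B v t z" using assms(3-5) cellOf_sub unfolding loc_def by blast
  ultimately have "hnode d B a v t z = hnode d B a v t (z(v:=Suc t))"
    using assms(6) unfolding Zs_def by blast
  moreover have "hnode d B a v t z = 1" using assms(3,4) unfolding hnode_def by simp
  moreover have "hnode d B a v t (z(v:=Suc t)) = 0" unfolding hnode_def by simp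
  ultimately show False by simp
qed



definition spN :: "(tree \<times> (nat \<times> nat \<times> bool) list \<times> nat \<times> nat) set \<Rightarrow> (nat \<times> nat) set" where
  "spN N = (\<lambda>(T,a,v,t). (v,t)) ` N"

definition closedN :: "(tree \<times> (nat \<times> nat \<times> bool) list \<times> nat \<times> nat) set \<Rightarrow> bool" where
  "closedN N \<longleftrightarrow> (\<forall>(T,a,v,t)\<in>N. \<forall>i<length a. (T, take i a, fst (a!i), fst (snd (a!i))) \<in> N)"

lemma chain:
  assumes valid: "\<forall>T\<in>set E. valid_tree d (grid d B) T"
    and N: "finite N" "N \<subseteq> allnodes d B E" "closedN N"
  shows "card (spN N - P0) = k \<Longrightarrow> Inv d B E (QP P0) n0 \<Longrightarrow>
    Inv d B E (QP (P0 \<union> spN N)) (n0 + card (spN N - P0))"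
proof (induct k arbitrary: P0 n0)
  case 0
  have "finite (spN N)" using N(1) unfolding spN_def by auto
  then have "spN N \<subseteq> P0" using 0(1) by auto
  then have "P0 \<union> spN N = P0" by auto
  then show ?case using 0 by simp
next
  case (Suc k)
  have fin: "finite (spN N)" using N(1) unfolding spN_def by auto
  have "spN N - P0 \<noteq> {}"
  proof
    assume h: "spN N - P0 = {}"
    have "card (spN N - P0) = 0" by (subst h) simp
    then show False using Suc(2) by simp
  qed
  then obtain p where p: "p \<in> spN N" "p \<notin> P0" by blast
  then obtain x0 where "x0 \<in> N" "p = (\<lambda>(T,a,v,t). (v,t)) x0" unfolding spN_def by blast
  then have x0: "x0 \<in> N" "(\<lambda>(T,a,v,t). (v,t)) x0 \<notin> P0" using p by auto
  obtain x where x: "x \<in> N \<and> (\<lambda>(T,a,v,t). (v,t)) x \<notin> P0"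
    and xmin: "\<forall>y. y \<in> N \<and> (\<lambda>(T,a,v,t). (v,t)) y \<notin> P0 \<longrightarrow> (\<lambda>(T,a,v,t). length a) x \<le> (\<lambda>(T,a,v,t). length a) y"
    using ex_has_least_nat[of "\<lambda>y. y \<in> N \<and> (\<lambda>(T,a,v,t). (v,t)) y \<notin> P0" x0 "\<lambda>(T,a,v,t). length a"] x0
    by blast
  obtain T a v t where xe: "x = (T,a,v,t)" by (cases x) auto
  have xN: "(T,a,v,t) \<in> N" and vt: "(v,t) \<notin> P0" using x xe by auto
  have xall: "(T,a,v,t) \<in> allnodes d B E" using xN N(2) by auto
  have spa: "splits a \<subseteq> P0"
  proof
    fix p assume "p \<in> splits a"
    then obtain i where i: "i < length a" "p = (fst (a!i), fst (snd (a!i)))"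
      unfolding splits_def by (auto simp: in_set_conv_nth split: prod.splits)
    have "(T, take i a, fst (a!i), fst (snd (a!i))) \<in> N" using N(3) xN i(1) unfolding closedN_def by fastforce
    moreover have "length (take i a) < length a" using i(1) by simp
    ultimately show "p \<in> P0" using xmin xe i(2) by fastforce
  qed
  obtain z where z: "z \<in> cellOf (grid d B) a" "z v = t" "z(v:=Suc t) \<in> cellOf (grid d B) a"
    using node_props'[OF xall valid] by blast
  have step: "Inv d B E (QP (insert (v,t) P0)) (Suc n0)"
  proof (rule inv_step[OF Suc(3)])
    show "QP P0 \<subseteq> QP (insert (v, t) P0)" unfolding QP_def by auto
    show "hnode d B a v t \<in> Fspace d B E" by (rule hnode_in_F[OF xall])
    show "hnode d B a v t \<in> Zs d B (QP (insert (v, t) P0))"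
      by (rule hnode_Z[where P = "insert (v,t) P0"]) (use spa node_nrep[OF xall valid] in \<open>auto simp: QP_def\<close>)
    show "hnode d B a v t \<notin> Zs d B (QP P0)"
      by (rule hnode_notZ[OF xall valid z]) (use vt in \<open>auto simp: QP_def\<close>)
  qed
  have vtN: "(v,t) \<in> spN N" using xN unfolding spN_def by force
  have c: "card (spN N - insert (v,t) P0) = k"
  proof -
    have "spN N - insert (v,t) P0 = (spN N - P0) - {(v,t)}" by auto
    then show ?thesis using Suc(2) vtN vt fin by simp
  qed
  have "Inv d B E (QP (insert (v,t) P0 \<union> spN N)) (Suc n0 + card (spN N - insert (v,t) P0))"
    by (rule Suc(1)[OF c step])
  moreover have "insert (v,t) P0 \<union> spN N = P0 \<union> spN N" using vtN by auto
  ultimately show ?case using c Suc(2) by simp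
qed

lemma grid_ne: "1 \<le> B \<Longrightarrow> (\<lambda>k. if k \<in> {1..d} then 1 else 0) \<in> grid d B"
  unfolding grid_def by auto

lemma inv_base:
  assumes "E \<noteq> []" "1 \<le> B"
  shows "Inv d B E Q 1"
proof -
  obtain T where T: "T \<in> set E" using assms(1) by (cases E) auto
  have "fsv.span ((\<lambda>A. indicator A) ` leaves (grid d B) T) \<subseteq> Fspace d B E"
    unfolding Fspace_def by (rule fsv.span_mono) (use T in auto)
  then have inF: "indicator (grid d B) \<in> Fspace d B E" using ind_span_leaves by blast
  have inZ: "indicator (grid d B) \<in> Zs d B Q" unfolding Zs_def loc_def by (auto simp: indicator_def)
  have "(indicator (grid d B) :: _ \<Rightarrow> real) \<noteq> 0"
  proof
    assume "(indicator (grid d B) :: _ \<Rightarrow> real) = 0"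
    then have "(indicator (grid d B) :: _ \<Rightarrow> real) (\<lambda>k. if k \<in> {1..d} then 1 else 0) = 0" by simp
    then show False using grid_ne[OF assms(2), of d] by simp
  qed
  then have "fsv.independent {indicator (grid d B)}" by simp
  then show ?thesis unfolding Inv_def using inF inZ by (intro exI[of _ "{indicator (grid d B)}"]) auto
qed

lemma allnodes_finite: "finite (allnodes d B E)"
proof -
  have "allnodes d B E = (\<Union>T\<in>set E. (\<lambda>(a,v,t). (T,a,v,t)) ` nodes (grid d B) T)"
    unfolding allnodes_def by auto
  then show ?thesis using finite_nodes by auto
qed

lemma allnodes_closed: "closedN (allnodes d B E)"
  unfolding closedN_def allnodes_def using node_anc by fastforce

definition SP :: "nat \<Rightarrow> nat \<Rightarrow> tree list \<Rightarrow> (nat \<times> nat) set" where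
  "SP d B E = spN (allnodes d B E)"

lemma lower_basic:
  assumes valid: "\<forall>T\<in>set E. valid_tree d (grid d B) T" and "E \<noteq> []" "1 \<le> B"
  shows "1 + card (SP d B E) \<le> df d B E"
proof -
  have "Inv d B E (QP ({} \<union> SP d B E)) (1 + card (SP d B E - {}))"
    unfolding SP_def
    by (rule chain[OF valid allnodes_finite order_refl allnodes_closed refl inv_base[OF assms(2,3)]])
  then show ?thesis using inv_dim by fastforce
qed



lemma span_jump:
  assumes "g \<in> Fspace d B E" "g y \<noteq> g y'"
  shows "\<exists>T\<in>set E. \<exists>L\<in>leaves (grid d B) T. (indicator L y :: real) \<noteq> indicator L y'"
proof (rule ccontr)
  assume "\<not> ?thesis"
  then have h: "\<forall>T\<in>set E. \<forall>L\<in>leaves (grid d B) T. (indicator L y :: real) = indicator L y'" by blast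
  have "(\<lambda>A. indicator A) ` (\<Union>T\<in>set E. leaves (grid d B) T) \<subseteq> {f :: (nat \<Rightarrow> nat) \<Rightarrow> real. f y = f y'}"
  proof
    fix f :: "(nat \<Rightarrow> nat) \<Rightarrow> real" assume "f \<in> (\<lambda>A. indicator A) ` (\<Union>T\<in>set E. leaves (grid d B) T)"
    then obtain T L where "T \<in> set E" "L \<in> leaves (grid d B) T" "f = indicator L" by blast
    then show "f \<in> {f. f y = f y'}" using h by simp
  qed
  moreover have "fsv.subspace {f :: (nat \<Rightarrow> nat) \<Rightarrow> real. f y = f y'}"
    unfolding fsv.subspace_def by (auto simp: fscale_def)
  ultimately have "Fspace d B E \<subseteq> {f. f y = f y'}" unfolding Fspace_def by (rule fsv.span_minimal)
  then show False using assms by auto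
qed

lemma jump_node:
  assumes "g \<in> Fspace d B E" "loc d B w c y" "g y \<noteq> g (y(w:=Suc c))"
  shows "\<exists>T a. (T,a,w,c) \<in> allnodes d B E \<and> y \<in> cellOf (grid d B) a \<and> y(w:=Suc c) \<in> cellOf (grid d B) a"
proof -
  have "\<exists>T\<in>set E. \<exists>L\<in>leaves (grid d B) T. (indicator L y :: real) \<noteq> indicator L (y(w:=Suc c))"
    using span_jump[of g d B E y "y(w:=Suc c)"] assms(1,3) by simp
  then obtain T L where TL: "T \<in> set E" "L \<in> leaves (grid d B) T" "(indicator L y :: real) \<noteq> indicator L (y(w:=Suc c))"
    by blast
  have l: "y \<in> grid d B" "y(w:=Suc c) \<in> grid d B" "y w = c" using assms(2) unfolding loc_def by auto
  obtain a where
    "(a,w,c) \<in> nodes (grid d B) T" "y \<in> cellOf (grid d B) a" "y(w:=Suc c) \<in> cellOf (grid d B) a"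
    using covering[of L "grid d B" T y w c, OF TL(2) l(1) l(2) l(3) TL(3)] by blast
  then show ?thesis using TL(1) by (intro exI[of _ T] exI[of _ a]) (simp add: allnodes_def)
qed

definition ancN :: "tree \<Rightarrow> (nat \<times> nat \<times> bool) list \<Rightarrow> (tree \<times> (nat \<times> nat \<times> bool) list \<times> nat \<times> nat) set" where
  "ancN T a = (\<lambda>k. (T, take k a, fst (a!k), fst (snd (a!k)))) ` {..<length a}"

lemma ancN_finite: "finite (ancN T a)" unfolding ancN_def by auto

lemma ancN_closed: "closedN (ancN T a)"
  unfolding closedN_def ancN_def by (auto simp: min_def)

lemma ancN_sub: "(T,a,v,t) \<in> allnodes d B E \<Longrightarrow> ancN T a \<subseteq> allnodes d B E"
  unfolding ancN_def allnodes_def using node_anc by fastforce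

lemma spN_ancN: "spN (ancN T a) = splits a"
proof -
  have "set a = (!) a ` {..<length a}" by (auto simp: set_conv_nth)
  then show ?thesis by (simp add: spN_def ancN_def splits_def image_image case_prod_beta)
qed

lemma closedN_Un: assumes "closedN N1" "closedN N2" shows "closedN (N1 \<union> N2)"
  unfolding closedN_def
proof (intro ballI)
  fix x assume x: "x \<in> N1 \<union> N2"
  obtain T a v t where xe: "x = (T,a,v,t)" by (cases x) auto
  show "case x of (T, a, v, t) \<Rightarrow> \<forall>i<length a. (T, take i a, fst (a ! i), fst (snd (a ! i))) \<in> N1 \<union> N2"
  proof (cases "x \<in> N1")
    case True then show ?thesis using assms(1) unfolding closedN_def xe by fastforce
  next
    case False then have "x \<in> N2" using x by simp
    then show ?thesis using assms(2) unfolding closedN_def xe by fastforce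
  qed
qed

lemma spN_Un: "spN (N1 \<union> N2) = spN N1 \<union> spN N2" unfolding spN_def by (rule image_Un)

lemma spN_mono: "N1 \<subseteq> N2 \<Longrightarrow> spN N1 \<subseteq> spN N2" unfolding spN_def by (rule image_mono)

lemma lower_strict:
  assumes valid: "\<forall>T\<in>set E. valid_tree d (grid d B) T" and ne: "E \<noteq> []" "1 \<le> B"
    and M: "(T,aM,j,b) \<in> allnodes d B E" and anc: "(i,a0,s0) \<in> set aM" "i \<noteq> j"
    and g: "g \<in> Fspace d B E" "\<forall>y. loc d B j b y \<longrightarrow> g y \<noteq> g (y(j:=Suc b))"
  shows "2 + card (SP d B E) \<le> df d B E"
proof -
  obtain i0 where i0: "i0 < length aM" "aM!i0 = (i,a0,s0)" using anc(1) by (auto simp: in_set_conv_nth)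
  have "(take i0 aM, i, a0) \<in> nodes (grid d B) T"
    using node_anc[of aM j b "grid d B" T i0] M i0 unfolding allnodes_def by auto
  then have Mi: "(T, take i0 aM, i, a0) \<in> allnodes d B E" using M unfolding allnodes_def by auto
  have pi: "i \<in> {1..d}" "1 \<le> a0" "a0 < B" using node_props'[OF Mi valid] by auto
  have pj: "j \<in> {1..d}" "1 \<le> b" "b < B" using node_props'[OF M valid] by auto
  obtain z where z: "z \<in> cellOf (grid d B) aM" "z j = b" "z(j:=Suc b) \<in> cellOf (grid d B) aM"
    using node_props'[OF M valid] by blast
  define y where "y = (\<lambda>k. if k \<in> {1..d} then 1 else 0)(j:=b, i:= if s0 then Suc a0 else a0)"
  have ly: "loc d B j b y" unfolding loc_def y_def grid_def using pi pj anc(2) by auto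
  have ynot: "y \<notin> cellOf (grid d B) aM"
  proof
    assume "y \<in> cellOf (grid d B) aM"
    then have "(y i \<le> a0) = s0" using anc(1) unfolding cellOf_def by auto
    then show False unfolding y_def by (cases s0) auto
  qed
  obtain T' aM' where M': "(T',aM',j,b) \<in> allnodes d B E" "y \<in> cellOf (grid d B) aM'"
    "y(j:=Suc b) \<in> cellOf (grid d B) aM'"
    using jump_node[OF g(1) ly] g(2) ly by blast
  have yj: "y j = b" using ly unfolding loc_def by simp
  define N1 where "N1 = ancN T aM \<union> ancN T' aM'"
  define P1 where "P1 = spN N1"
  have P1: "P1 = splits aM \<union> splits aM'" unfolding P1_def N1_def spN_Un spN_ancN ..
  have jbP1: "(j,b) \<notin> P1" using node_nrep[OF M valid] node_nrep[OF M'(1) valid] P1 by auto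
  have N1sub: "N1 \<subseteq> allnodes d B E" unfolding N1_def using ancN_sub[OF M] ancN_sub[OF M'(1)] by auto
  have inv1: "Inv d B E (QP ({} \<union> spN N1)) (1 + card (spN N1 - {}))"
    by (rule chain[OF valid _ N1sub _ refl inv_base[OF ne]])
      (auto simp: N1_def ancN_finite intro: closedN_Un ancN_closed)
  then have inv1': "Inv d B E (QP P1) (1 + card P1)" unfolding P1_def by simp
  define Q' where "Q' = QP P1 \<union> {(w,c,y). w = j \<and> c = b \<and> y \<in> cellOf (grid d B) aM}"
  have inv2: "Inv d B E Q' (Suc (1 + card P1))"
  proof (rule inv_step[OF inv1'])
    show "QP P1 \<subseteq> Q'" unfolding Q'_def by auto
    show "hnode d B aM j b \<in> Fspace d B E" by (rule hnode_in_F[OF M])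
    show "hnode d B aM j b \<in> Zs d B Q'"
      by (rule hnode_Z[where P = P1]) (use P1 node_nrep[OF M valid] in \<open>auto simp: Q'_def\<close>)
    show "hnode d B aM j b \<notin> Zs d B (QP P1)"
      by (rule hnode_notZ[OF M valid z]) (use jbP1 in \<open>auto simp: QP_def\<close>)
  qed
  have inv3: "Inv d B E (QP (insert (j,b) P1)) (Suc (Suc (1 + card P1)))"
  proof (rule inv_step[OF inv2])
    show "Q' \<subseteq> QP (insert (j, b) P1)" unfolding Q'_def QP_def by auto
    show "hnode d B aM' j b \<in> Fspace d B E" by (rule hnode_in_F[OF M'(1)])
    show "hnode d B aM' j b \<in> Zs d B (QP (insert (j, b) P1))"
      by (rule hnode_Z[where P = "insert (j,b) P1"]) (use P1 node_nrep[OF M'(1) valid] in \<open>auto simp: QP_def\<close>)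
    show "hnode d B aM' j b \<notin> Zs d B Q'"
      by (rule hnode_notZ[OF M'(1) valid M'(2) yj M'(3)]) (use jbP1 ynot in \<open>auto simp: Q'_def QP_def\<close>)
  qed
  have inv4: "Inv d B E (QP (insert (j,b) P1 \<union> SP d B E))
      (Suc (Suc (1 + card P1)) + card (SP d B E - insert (j,b) P1))"
    unfolding SP_def by (rule chain[OF valid allnodes_finite order_refl allnodes_closed refl inv3])
  have finSP: "finite (SP d B E)" unfolding SP_def spN_def using allnodes_finite by (rule finite_imageI)
  have jbSP: "(j,b) \<in> SP d B E" unfolding SP_def spN_def by (rule image_eqI[OF _ M]) simp
  have P1SP: "P1 \<subseteq> SP d B E" unfolding P1_def SP_def by (rule spN_mono[OF N1sub])
  have sub: "insert (j,b) P1 \<subseteq> SP d B E" using jbSP P1SP by blast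
  have finP1: "finite P1" using finite_subset[OF P1SP finSP] .
  have c1: "card (SP d B E - insert (j,b) P1) = card (SP d B E) - card (insert (j,b) P1)"
    by (rule card_Diff_subset[OF _ sub]) (use finP1 in simp)
  have c2: "card (insert (j,b) P1) \<le> card (SP d B E)" by (rule card_mono[OF finSP sub])
  have c3: "card (insert (j,b) P1) = Suc (card P1)" using jbP1 finP1 by simp
  have "Suc (Suc (1 + card P1)) + card (SP d B E - insert (j,b) P1) = 2 + card (SP d B E)"
    using c1 c2 c3 by linarith
  then show ?thesis using inv_dim[OF inv4] by simp
qed



definition pt :: "nat \<Rightarrow> nat \<Rightarrow> nat" where "pt d = (\<lambda>k. if k \<in> {1..d} then 1 else 0)"

lemma pt_upd_grid: "i \<in> {1..d} \<Longrightarrow> 1 \<le> c \<Longrightarrow> c \<le> B \<Longrightarrow> (pt d)(i:=c) \<in> grid d B"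
  unfolding pt_def grid_def by auto

definition Cu :: "nat \<Rightarrow> nat \<Rightarrow> nat \<Rightarrow> nat \<Rightarrow> (nat \<Rightarrow> nat) set" where
  "Cu d B i u = {x\<in>grid d B. x i \<le> u}"

fun cutJ :: "nat \<Rightarrow> (nat \<Rightarrow> bool) \<Rightarrow> nat \<Rightarrow> tree" where
  "cutJ i P 0 = Leaf"
| "cutJ i P (Suc n) = (if P (Suc n) then Node i (Suc n) (cutJ i P n) Leaf else cutJ i P n)"

lemma Cu_le: "b \<le> u \<Longrightarrow> {x\<in>Cu d B i u. x i \<le> b} = Cu d B i b"
  unfolding Cu_def by auto

lemma Cu_B: "i \<in> {1..d} \<Longrightarrow> Cu d B i B = grid d B"
  unfolding Cu_def grid_def by auto

lemma valid_cutJ: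
  assumes "i \<in> {1..d}"
  shows "n < u \<Longrightarrow> u \<le> B \<Longrightarrow> valid_tree d (Cu d B i u) (cutJ i P n)"
proof (induct n arbitrary: u)
  case 0 then show ?case by simp
next
  case (Suc n)
  show ?case
  proof (cases "P (Suc n)")
    case True
    have l: "{x\<in>Cu d B i u. x i \<le> Suc n} = Cu d B i (Suc n)" using Suc(2) by (intro Cu_le) simp
    have "(pt d)(i:=1) \<in> Cu d B i (Suc n)" unfolding Cu_def using pt_upd_grid[OF assms, of 1 B] Suc(2,3) by simp
    then have ne1: "{x\<in>Cu d B i u. x i \<le> Suc n} \<noteq> {}" using l by auto
    have "(pt d)(i:=Suc (Suc n)) \<in> {x\<in>Cu d B i u. x i > Suc n}"
      unfolding Cu_def using pt_upd_grid[OF assms, of "Suc (Suc n)" B] Suc(2,3) by simp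
    then have ne2: "{x\<in>Cu d B i u. x i > Suc n} \<noteq> {}" by blast
    have v: "valid_tree d (Cu d B i (Suc n)) (cutJ i P n)" using Suc(1)[of "Suc n"] Suc(2,3) by simp
    show ?thesis using True ne1 ne2 v l assms by simp
  next
    case False
    then show ?thesis using Suc by simp
  qed
qed

lemma leaves_cutJ_span:
  assumes "i \<in> {1..d}"
  shows "n < u \<Longrightarrow> indicator (Cu d B i u) \<in> fsv.span G \<Longrightarrow>
    (\<forall>b. 1 \<le> b \<and> b \<le> n \<and> P b \<longrightarrow> indicator (Cu d B i b) \<in> fsv.span G) \<Longrightarrow>
    L \<in> leaves (Cu d B i u) (cutJ i P n) \<Longrightarrow> indicator L \<in> fsv.span G"
proof (induct n arbitrary: u)
  case 0 then show ?case by simp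
next
  case (Suc n)
  show ?case
  proof (cases "P (Suc n)")
    case True
    have l: "{x\<in>Cu d B i u. x i \<le> Suc n} = Cu d B i (Suc n)" using Suc(2) by (intro Cu_le) simp
    from Suc(5) True l have "L \<in> leaves (Cu d B i (Suc n)) (cutJ i P n) \<or> L = {x\<in>Cu d B i u. x i > Suc n}"
      by auto
    then show ?thesis
    proof
      assume "L \<in> leaves (Cu d B i (Suc n)) (cutJ i P n)"
      then show ?thesis using Suc(1)[of "Suc n"] Suc(4) True by simp
    next
      assume L: "L = {x\<in>Cu d B i u. x i > Suc n}"
      have "(indicator L :: _ \<Rightarrow> real) = indicator (Cu d B i u) - indicator (Cu d B i (Suc n))"
        unfolding L Cu_def using Suc(2) by (auto simp: fun_eq_iff indicator_def)
      moreover have "indicator (Cu d B i (Suc n)) \<in> fsv.span G" using Suc(4) True by simp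
      ultimately show ?thesis using Suc(3) fsv.span_diff by metis
    qed
  next
    case False
    have "n < u" using Suc(2) by simp
    then show ?thesis using Suc(1)[of u] Suc(3,4,5) False by simp
  qed
qed

lemma cutJ_contains:
  shows "n < u \<Longrightarrow> 1 \<le> b \<Longrightarrow> b \<le> n \<Longrightarrow> P b \<Longrightarrow>
    indicator (Cu d B i b) \<in> fsv.span ((\<lambda>A. indicator A) ` leaves (Cu d B i u) (cutJ i P n))"
proof (induct n arbitrary: u)
  case 0 then show ?case by simp
next
  case (Suc n)
  show ?case
  proof (cases "P (Suc n)")
    case True
    have l: "{x\<in>Cu d B i u. x i \<le> Suc n} = Cu d B i (Suc n)" using Suc(2) by (intro Cu_le) simp
    have sub: "fsv.span ((\<lambda>A. indicator A) ` leaves (Cu d B i (Suc n)) (cutJ i P n))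
      \<subseteq> fsv.span ((\<lambda>A. indicator A) ` leaves (Cu d B i u) (cutJ i P (Suc n)))"
      by (rule fsv.span_mono) (use True l in auto)
    show ?thesis
    proof (cases "b = Suc n")
      case True
      then show ?thesis using sub ind_span_leaves[of "Cu d B i (Suc n)" "cutJ i P n"] by blast
    next
      case False
      then have "indicator (Cu d B i b) \<in> fsv.span ((\<lambda>A. indicator A) ` leaves (Cu d B i (Suc n)) (cutJ i P n))"
        using Suc by simp
      then show ?thesis using sub by blast
    qed
  next
    case False
    then have "b \<noteq> Suc n" using Suc by auto
    then show ?thesis using Suc False by simp
  qed
qed



definition Kb :: "(nat \<Rightarrow> nat \<Rightarrow> real) \<Rightarrow> nat \<Rightarrow> nat \<Rightarrow> nat set" where
  "Kb fs B i = {b \<in> {1..<B}. fs i b \<noteq> fs i (Suc b)}"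

definition KI :: "(nat \<Rightarrow> nat \<Rightarrow> real) \<Rightarrow> nat \<Rightarrow> nat set \<Rightarrow> (nat \<times> nat) set" where
  "KI fs B I = Sigma I (Kb fs B)"

definition ecoT :: "(nat \<Rightarrow> nat \<Rightarrow> real) \<Rightarrow> nat \<Rightarrow> nat \<Rightarrow> tree" where
  "ecoT fs B i = cutJ i (\<lambda>b. b \<in> Kb fs B i) (B - 1)"

definition EI :: "(nat \<Rightarrow> nat \<Rightarrow> real) \<Rightarrow> nat \<Rightarrow> nat set \<Rightarrow> nat \<Rightarrow> tree list" where
  "EI fs B I l = map (ecoT fs B) (sorted_list_of_set I) @ replicate (l - card I) Leaf"

definition GI :: "nat \<Rightarrow> nat \<Rightarrow> (nat \<Rightarrow> nat \<Rightarrow> real) \<Rightarrow> nat set \<Rightarrow> ((nat \<Rightarrow> nat) \<Rightarrow> real) set" where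
  "GI d B fs I = insert (indicator (grid d B)) ((\<lambda>(i,b). indicator (Cu d B i b)) ` KI fs B I)"

definition restr :: "nat \<Rightarrow> nat \<Rightarrow> ((nat \<Rightarrow> nat) \<Rightarrow> real) \<Rightarrow> (nat \<Rightarrow> nat) \<Rightarrow> real" where
  "restr d B f = (\<lambda>x. if x \<in> grid d B then f x else 0)"

lemma finite_Kb: "finite (Kb fs B i)" unfolding Kb_def by auto

lemma finite_KI: "finite I \<Longrightarrow> finite (KI fs B I)" unfolding KI_def using finite_Kb by auto

lemma telescope:
  assumes "i \<in> {1..d}" "x \<in> grid d B"
  shows "fs i (x i) = fs i B + (\<Sum>b\<in>Kb fs B i. (fs i b - fs i (Suc b)) * (if x i \<le> b then 1 else 0))"
proof -
  have xi: "1 \<le> x i" "x i \<le> B" using assms unfolding grid_def by auto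
  let ?h = "\<lambda>b. (fs i b - fs i (Suc b)) * (if x i \<le> b then 1 else 0)"
  have "(\<Sum>b\<in>Kb fs B i. ?h b) = (\<Sum>b\<in>{1..<B}. ?h b)"
    by (rule sum.mono_neutral_left) (auto simp: Kb_def)
  also have "\<dots> = (\<Sum>b\<in>{x i..<B}. fs i b - fs i (Suc b))"
    by (rule sum.mono_neutral_cong_right) (use xi in auto)
  also have "\<dots> = - (\<Sum>b\<in>{x i..<B}. fs i (Suc b) - fs i b)"
    by (simp add: sum_negf[symmetric])
  also have "\<dots> = - (fs i B - fs i (x i))"
    using sum_Suc_diff'[OF xi(2), of "fs i"] by simp
  finally show ?thesis by simp
qed

lemma restr_in_GI:
  assumes "I \<subseteq> {1..d}" "finite I"
  shows "restr d B (\<lambda>x. \<Sum>i\<in>I. fs i (x i)) \<in> fsv.span (GI d B fs I)"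
proof -
  define F where "F = (\<Sum>i\<in>I. fscale (fs i B) (indicator (grid d B)) +
     (\<Sum>b\<in>Kb fs B i. fscale (fs i b - fs i (Suc b)) (indicator (Cu d B i b))))"
  have eq: "restr d B (\<lambda>x. \<Sum>i\<in>I. fs i (x i)) = F"
  proof
    fix x
    show "restr d B (\<lambda>x. \<Sum>i\<in>I. fs i (x i)) x = F x"
    proof (cases "x \<in> grid d B")
      case True
      have "restr d B (\<lambda>x. \<Sum>i\<in>I. fs i (x i)) x = (\<Sum>i\<in>I. fs i (x i))" unfolding restr_def using True by simp
      also have "\<dots> = (\<Sum>i\<in>I. fs i B + (\<Sum>b\<in>Kb fs B i. (fs i b - fs i (Suc b)) * (if x i \<le> b then 1 else 0)))"
        by (rule sum.cong[OF refl]) (use telescope[OF _ True] assms(1) in blast)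
      also have "\<dots> = F x" unfolding F_def sum_fun_apply using True
        by (simp add: fscale_apply sum_fun_apply indicator_def Cu_def of_bool_def)
      finally show ?thesis .
    next
      case False
      have "F x = 0" unfolding F_def sum_fun_apply using False
        by (simp add: fscale_apply sum_fun_apply indicator_def Cu_def)
      then show ?thesis unfolding restr_def using False by simp
    qed
  qed
  have "F \<in> fsv.span (GI d B fs I)" unfolding F_def
  proof (intro fsv.span_sum fsv.span_add fsv.span_scale)
    show "indicator (grid d B) \<in> fsv.span (GI d B fs I)" for i
      by (rule fsv.span_base) (simp add: GI_def)
    show "indicator (Cu d B i b) \<in> fsv.span (GI d B fs I)" if "i \<in> I" "b \<in> Kb fs B i" for i b
      by (rule fsv.span_base) (use that in \<open>force simp: GI_def KI_def\<close>)
  qed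
  then show ?thesis using eq by simp
qed

lemma jump_gI:
  assumes "finite I" "j \<in> I" "loc d B j b y"
  shows "restr d B (\<lambda>x. \<Sum>i\<in>I. fs i (x i)) y - restr d B (\<lambda>x. \<Sum>i\<in>I. fs i (x i)) (y(j:=Suc b))
    = fs j b - fs j (Suc b)"
proof -
  have l: "y \<in> grid d B" "y(j:=Suc b) \<in> grid d B" "y j = b" using assms(3) unfolding loc_def by auto
  have s1: "(\<Sum>i\<in>I. fs i (y i)) = fs j b + (\<Sum>i\<in>I-{j}. fs i (y i))"
    using sum.remove[OF assms(1,2), of "\<lambda>i. fs i (y i)"] l(3) by simp
  have s2: "(\<Sum>i\<in>I. fs i ((y(j:=Suc b)) i)) = fs j (Suc b) + (\<Sum>i\<in>I-{j}. fs i ((y(j:=Suc b)) i))"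
    using sum.remove[OF assms(1,2), of "\<lambda>i. fs i ((y(j:=Suc b)) i)"] by simp
  have s3: "(\<Sum>i\<in>I-{j}. fs i ((y(j:=Suc b)) i)) = (\<Sum>i\<in>I-{j}. fs i (y i))"
    by (rule sum.cong) auto
  show ?thesis unfolding restr_def using l(1,2) s1 s2 s3 by simp
qed



lemma ecoT_valid:
  assumes "i \<in> {1..d}" "1 \<le> B"
  shows "valid_tree d (grid d B) (ecoT fs B i)"
proof -
  have "valid_tree d (Cu d B i B) (cutJ i (\<lambda>b. b \<in> Kb fs B i) (B - 1))"
    by (rule valid_cutJ[OF assms(1)]) (use assms in auto)
  then show ?thesis unfolding ecoT_def using Cu_B[OF assms(1), of B] by simp
qed

lemma set_EI: "finite I \<Longrightarrow> set (EI fs B I l) \<subseteq> ecoT fs B ` I \<union> {Leaf}"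
  unfolding EI_def by auto

lemma ecoT_in_EI: "finite I \<Longrightarrow> i \<in> I \<Longrightarrow> ecoT fs B i \<in> set (EI fs B I l)"
  unfolding EI_def by auto

lemma upper:
  assumes I: "I \<subseteq> {1..d}" "finite I" "I \<noteq> {}" and l: "card I \<le> l" and B: "1 \<le> B"
  shows "EI fs B I l \<in> TSE d B l"
    and "restr d B (\<lambda>x. \<Sum>i\<in>I. fs i (x i)) \<in> Fspace d B (EI fs B I l)"
    and "df d B (EI fs B I l) \<le> 1 + card (KI fs B I)"
proof -
  let ?E = "EI fs B I l"
  have "length ?E = l" unfolding EI_def using l I(2) by simp
  moreover have "\<forall>T\<in>set ?E. valid_tree d (grid d B) T"
  proof
    fix T assume "T \<in> set ?E"
    then have "T \<in> ecoT fs B ` I \<or> T = Leaf" using set_EI[OF I(2)] by blast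
    then show "valid_tree d (grid d B) T" using ecoT_valid[OF _ B] I(1) by auto
  qed
  ultimately show "?E \<in> TSE d B l" unfolding TSE_def by simp
  have Wsub: "(\<lambda>A. indicator A) ` (\<Union>T\<in>set ?E. leaves (grid d B) T) \<subseteq> fsv.span (GI d B fs I)"
  proof
    fix f :: "(nat \<Rightarrow> nat) \<Rightarrow> real" assume "f \<in> (\<lambda>A. indicator A) ` (\<Union>T\<in>set ?E. leaves (grid d B) T)"
    then obtain T L where T: "T \<in> set ?E" "L \<in> leaves (grid d B) T" "f = indicator L" by blast
    have g: "indicator (grid d B) \<in> fsv.span (GI d B fs I)" by (rule fsv.span_base) (simp add: GI_def)
    from T(1) have "T \<in> ecoT fs B ` I \<or> T = Leaf" using set_EI[OF I(2)] by blast
    then show "f \<in> fsv.span (GI d B fs I)"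
    proof
      assume "T \<in> ecoT fs B ` I"
      then obtain i where i: "i \<in> I" "T = ecoT fs B i" by blast
      have id: "i \<in> {1..d}" using i I(1) by auto
      have L: "L \<in> leaves (Cu d B i B) (cutJ i (\<lambda>b. b \<in> Kb fs B i) (B - 1))"
        using T(2) i(2) Cu_B[OF id] unfolding ecoT_def by simp
      have "indicator L \<in> fsv.span (GI d B fs I)"
      proof (rule leaves_cutJ_span[OF id _ _ _ L])
        show "B - 1 < B" using B by simp
        show "indicator (Cu d B i B) \<in> fsv.span (GI d B fs I)" using g Cu_B[OF id] by simp
        show "\<forall>b. 1 \<le> b \<and> b \<le> B - 1 \<and> b \<in> Kb fs B i \<longrightarrow> indicator (Cu d B i b) \<in> fsv.span (GI d B fs I)"
        proof (intro allI impI)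
          fix b assume "1 \<le> b \<and> b \<le> B - 1 \<and> b \<in> Kb fs B i"
          then have "(i,b) \<in> KI fs B I" using i(1) unfolding KI_def by simp
          then show "indicator (Cu d B i b) \<in> fsv.span (GI d B fs I)"
            by (intro fsv.span_base) (force simp: GI_def)
        qed
      qed
      then show ?thesis using T(3) by simp
    next
      assume "T = Leaf"
      then show ?thesis using T g by simp
    qed
  qed
  have FG: "Fspace d B ?E \<subseteq> fsv.span (GI d B fs I)"
    unfolding Fspace_def by (rule fsv.span_minimal[OF Wsub fsv.subspace_span])
  have finG: "finite (GI d B fs I)" unfolding GI_def using finite_KI[OF I(2)] by simp
  have "df d B ?E \<le> card (GI d B fs I)" unfolding df_def by (rule fsv.dim_le_card[OF FG finG])
  also have "\<dots> \<le> Suc (card (KI fs B I))"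
  proof -
    let ?A = "(\<lambda>(i,b). indicator (Cu d B i b) :: (nat \<Rightarrow> nat) \<Rightarrow> real) ` KI fs B I"
    have "card ?A \<le> card (KI fs B I)" by (rule card_image_le[OF finite_KI[OF I(2)]])
    moreover have "finite ?A" using finite_KI[OF I(2)] by simp
    ultimately show ?thesis unfolding GI_def by (simp add: card_insert_if)
  qed
  finally show "df d B ?E \<le> 1 + card (KI fs B I)" by simp
  have GF: "GI d B fs I \<subseteq> Fspace d B ?E"
  proof
    fix f :: "(nat \<Rightarrow> nat) \<Rightarrow> real" assume f: "f \<in> GI d B fs I"
    obtain i0 where i0: "i0 \<in> I" using I(3) by blast
    show "f \<in> Fspace d B ?E"
    proof (cases "f = indicator (grid d B)")
      case True
      have "fsv.span ((\<lambda>A. indicator A) ` leaves (grid d B) (ecoT fs B i0)) \<subseteq> Fspace d B ?E"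
        unfolding Fspace_def by (rule fsv.span_mono) (use ecoT_in_EI[OF I(2) i0] in blast)
      then show ?thesis using True ind_span_leaves by blast
    next
      case False
      then have "f \<in> (\<lambda>(i,b). indicator (Cu d B i b)) ` KI fs B I" using f unfolding GI_def by simp
      then obtain p where p: "p \<in> KI fs B I" "f = (\<lambda>(i,b). indicator (Cu d B i b)) p" by (rule imageE) simp
      obtain i b where "p = (i,b)" by (cases p)
      then have ib: "(i,b) \<in> KI fs B I" "f = indicator (Cu d B i b)" using p by auto
      have i: "i \<in> I" "b \<in> Kb fs B i" using ib(1) unfolding KI_def by auto
      have id: "i \<in> {1..d}" using i I(1) by auto
      have bb: "1 \<le> b" "b \<le> B - 1" using i(2) unfolding Kb_def by auto
      have "indicator (Cu d B i b) \<in> fsv.span ((\<lambda>A. indicator A) ` leaves (Cu d B i B) (cutJ i (\<lambda>b. b \<in> Kb fs B i) (B - 1)))"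
        by (rule cutJ_contains) (use B bb i(2) in auto)
      then have "f \<in> fsv.span ((\<lambda>A. indicator A) ` leaves (grid d B) (ecoT fs B i))"
        using ib(2) Cu_B[OF id] unfolding ecoT_def by simp
      moreover have "fsv.span ((\<lambda>A. indicator A) ` leaves (grid d B) (ecoT fs B i)) \<subseteq> Fspace d B ?E"
        unfolding Fspace_def by (rule fsv.span_mono) (use ecoT_in_EI[OF I(2) i(1)] in blast)
      ultimately show ?thesis by blast
    qed
  qed
  have "fsv.span (GI d B fs I) \<subseteq> Fspace d B ?E"
    using fsv.span_minimal[OF GF] unfolding Fspace_def by (simp add: fsv.subspace_span)
  then show "restr d B (\<lambda>x. \<Sum>i\<in>I. fs i (x i)) \<in> Fspace d B ?E"
    using restr_in_GI[OF I(1,2)] by blast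
qed

lemma SP_finite: "finite (SP d B E)" unfolding SP_def spN_def using allnodes_finite by (rule finite_imageI)

lemma KI_sub_SP:
  assumes I: "I \<subseteq> {1..d}" "finite I" and F: "restr d B (\<lambda>x. \<Sum>i\<in>I. fs i (x i)) \<in> Fspace d B E"
  shows "KI fs B I \<subseteq> SP d B E"
proof
  fix p assume p: "p \<in> KI fs B I"
  then obtain j b where jb: "p = (j,b)" "j \<in> I" "b \<in> Kb fs B j" unfolding KI_def by blast
  have jd: "j \<in> {1..d}" using jb I by auto
  have bb: "1 \<le> b" "b < B" "fs j b \<noteq> fs j (Suc b)" using jb(3) unfolding Kb_def by auto
  define y where "y = (pt d)(j:=b)"
  have ly: "loc d B j b y" unfolding loc_def y_def using pt_upd_grid[OF jd] bb by simp
  have "restr d B (\<lambda>x. \<Sum>i\<in>I. fs i (x i)) y \<noteq> restr d B (\<lambda>x. \<Sum>i\<in>I. fs i (x i)) (y(j:=Suc b))"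
    using jump_gI[OF I(2) jb(2) ly, of fs] bb(3) by auto
  then obtain T a where "(T,a,j,b) \<in> allnodes d B E" using jump_node[OF F ly] by blast
  then show "p \<in> SP d B E" unfolding SP_def spN_def jb(1) by (rule image_eqI[rotated]) simp
qed

lemma lower_I:
  assumes E: "E \<in> TSE d B l" "1 \<le> l" and B: "1 \<le> B"
    and I: "I \<subseteq> {1..d}" "finite I" and F: "restr d B (\<lambda>x. \<Sum>i\<in>I. fs i (x i)) \<in> Fspace d B E"
  shows "1 + card (KI fs B I) \<le> df d B E"
proof -
  have valid: "\<forall>T\<in>set E. valid_tree d (grid d B) T" and ne: "E \<noteq> []" using E unfolding TSE_def by auto
  have "card (KI fs B I) \<le> card (SP d B E)" by (rule card_mono[OF SP_finite KI_sub_SP[OF I F]])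
  then show ?thesis using lower_basic[OF valid ne B] by simp
qed

lemma dimL_I:
  assumes I: "I \<subseteq> {1..d}" "finite I" "I \<noteq> {}" and l: "card I \<le> l" and B: "1 \<le> B"
  shows "dimL d B l (\<lambda>x. \<Sum>i\<in>I. fs i (x i)) = 1 + card (KI fs B I)"
proof -
  have l1: "1 \<le> l" using l I(2,3) by (metis card_0_eq le_trans less_one not_le)
  note U = upper[OF I l B, of fs]
  have low: "1 + card (KI fs B I) \<le> df d B (EI fs B I l)" by (rule lower_I[OF U(1) l1 B I(1,2) U(2)])
  show ?thesis unfolding dimL_def
  proof (rule Least_equality)
    show "\<exists>E\<in>TSE d B l. (\<lambda>x. if x \<in> grid d B then \<Sum>i\<in>I. fs i (x i) else 0) \<in> Fspace d B E \<and> df d B E = 1 + card (KI fs B I)"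
      using U low unfolding restr_def by (intro bexI[of _ "EI fs B I l"]) auto
    show "1 + card (KI fs B I) \<le> y" if "\<exists>E\<in>TSE d B l. (\<lambda>x. if x \<in> grid d B then \<Sum>i\<in>I. fs i (x i) else 0) \<in> Fspace d B E \<and> df d B E = y" for y
      using that lower_I[OF _ l1 B I(1,2)] unfolding restr_def by blast
  qed
qed



fun cutN :: "nat \<Rightarrow> nat \<Rightarrow> tree \<Rightarrow> tree" where
  "cutN i 0 T = T"
| "cutN i (Suc n) T = Node i (Suc n) (cutN i n T) T"

fun fullT :: "nat \<Rightarrow> nat list \<Rightarrow> tree" where
  "fullT B [] = Leaf"
| "fullT B (i#is) = cutN i (B - 1) (fullT B is)"

lemma valid_cutN:
  assumes i: "i \<in> {1..d}" and D: "D \<subseteq> grid d B"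
  shows "(\<forall>c\<in>{1..Suc n}. {x\<in>D. x i = c} \<noteq> {} \<and> valid_tree d {x\<in>D. x i = c} T) \<Longrightarrow>
    valid_tree d {x\<in>D. x i \<le> Suc n} (cutN i n T)"
proof (induct n)
  case 0
  have "{x\<in>D. x i \<le> Suc 0} = {x\<in>D. x i = 1}"
  proof -
    have "\<forall>x\<in>D. 1 \<le> x i" using D i unfolding grid_def by auto
    then show ?thesis by force
  qed
  then show ?case using 0 by simp
next
  case (Suc n)
  have e1: "{x\<in>{x\<in>D. x i \<le> Suc (Suc n)}. x i \<le> Suc n} = {x\<in>D. x i \<le> Suc n}" by auto
  have e2: "{x\<in>{x\<in>D. x i \<le> Suc (Suc n)}. x i > Suc n} = {x\<in>D. x i = Suc (Suc n)}" by auto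
  have ne1: "{x\<in>D. x i = 1} \<noteq> {}" using Suc(2) by auto
  then have ne1': "{x\<in>D. x i \<le> Suc n} \<noteq> {}" by auto
  have ne2: "{x\<in>D. x i = Suc (Suc n)} \<noteq> {}" "valid_tree d {x\<in>D. x i = Suc (Suc n)} T" using Suc(2) by auto
  have v: "valid_tree d {x\<in>D. x i \<le> Suc n} (cutN i n T)" using Suc(1) Suc(2) by auto
  show ?case using e1 e2 ne1' ne2 v i by simp
qed

lemma valid_fullT:
  "distinct is \<Longrightarrow> set is \<subseteq> {1..d} \<Longrightarrow> D \<subseteq> grid d B \<Longrightarrow> D \<noteq> {} \<Longrightarrow>
   (\<forall>k\<in>set is. \<forall>x\<in>D. \<forall>c\<in>{1..B}. x(k:=c) \<in> D) \<Longrightarrow> valid_tree d D (fullT B is)"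
proof (induct "is" arbitrary: D)
  case Nil then show ?case by simp
next
  case (Cons i "is")
  have i: "i \<in> {1..d}" using Cons(3) by simp
  obtain x0 where x0: "x0 \<in> D" using Cons(5) by blast
  have xg: "x0 \<in> grid d B" using x0 Cons(4) by blast
  then have "1 \<le> x0 i" "x0 i \<le> B" using i unfolding grid_def by auto
  then have B: "1 \<le> B" "x0 i \<le> B" by linarith+
  have eqD: "{x\<in>D. x i \<le> Suc (B - 1)} = D"
    using Cons(4) i B(1) unfolding grid_def by force
  have "valid_tree d {x\<in>D. x i \<le> Suc (B - 1)} (cutN i (B - 1) (fullT B is))"
  proof (rule valid_cutN[OF i Cons(4)])
    show "\<forall>c\<in>{1..Suc (B - 1)}. {x\<in>D. x i = c} \<noteq> {} \<and> valid_tree d {x\<in>D. x i = c} (fullT B is)"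
    proof
      fix c assume c: "c \<in> {1..Suc (B - 1)}"
      then have cB: "c \<in> {1..B}" using B by auto
      have "x0(i:=c) \<in> D" by (rule Cons(6)[rule_format]) (use x0 cB in auto)
      then have mem: "x0(i:=c) \<in> {x\<in>D. x i = c}" by simp
      then have ne: "{x\<in>D. x i = c} \<noteq> {}" by blast
      have "valid_tree d {x\<in>D. x i = c} (fullT B is)"
      proof (rule Cons(1))
        show "distinct is" using Cons(2) by simp
        show "set is \<subseteq> {1..d}" using Cons(3) by simp
        show "{x\<in>D. x i = c} \<subseteq> grid d B" using Cons(4) by auto
        show "{x\<in>D. x i = c} \<noteq> {}" by (rule ne)
        show "\<forall>k\<in>set is. \<forall>x\<in>{x\<in>D. x i = c}. \<forall>c'\<in>{1..B}. x(k:=c') \<in> {x\<in>D. x i = c}"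
        proof (intro ballI)
          fix k x c' assume k: "k \<in> set is" and x: "x \<in> {x\<in>D. x i = c}" and c': "c' \<in> {1..B}"
          have "k \<noteq> i" using Cons(2) k by auto
          have "x(k:=c') \<in> D" by (rule Cons(6)[rule_format]) (use k x c' in auto)
          then show "x(k:=c') \<in> {x\<in>D. x i = c}" using \<open>k \<noteq> i\<close> x by simp
        qed
      qed
      then show "{x\<in>D. x i = c} \<noteq> {} \<and> valid_tree d {x\<in>D. x i = c} (fullT B is)" using ne by blast
    qed
  qed
  then show ?case using eqD by simp
qed

lemma leaves_cutN:
  "L \<in> leaves D (cutN i n T) \<Longrightarrow> D \<subseteq> {x. 1 \<le> x i \<and> x i \<le> Suc n} \<Longrightarrow>
   \<exists>D'. D' \<subseteq> D \<and> L \<in> leaves D' T \<and> (\<forall>x\<in>D'. \<forall>x'\<in>D'. x i = x' i)"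
proof (induct n arbitrary: D)
  case 0
  have h: "\<forall>x\<in>D. x i = 1" using 0(2) by auto
  have "\<forall>x\<in>D. \<forall>x'\<in>D. x i = x' i"
  proof (intro ballI)
    fix x x' assume "x \<in> D" "x' \<in> D"
    then show "x i = x' i" using h by metis
  qed
  then show ?case using 0(1) by (intro exI[of _ D]) simp
next
  case (Suc n)
  from Suc(2) have "L \<in> leaves {x\<in>D. x i \<le> Suc n} (cutN i n T) \<or> L \<in> leaves {x\<in>D. x i > Suc n} T" by simp
  then show ?case
  proof
    assume L1: "L \<in> leaves {x\<in>D. x i \<le> Suc n} (cutN i n T)"
    have "{x\<in>D. x i \<le> Suc n} \<subseteq> {x. 1 \<le> x i \<and> x i \<le> Suc n}"
    proof
      fix x assume "x \<in> {x\<in>D. x i \<le> Suc n}"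
      then have "x \<in> D" "x i \<le> Suc n" by auto
      then show "x \<in> {x. 1 \<le> x i \<and> x i \<le> Suc n}" using Suc(3) by auto
    qed
    from Suc(1)[OF L1 this] obtain D' where D': "D' \<subseteq> {x\<in>D. x i \<le> Suc n}" "L \<in> leaves D' T"
      "\<forall>x\<in>D'. \<forall>x'\<in>D'. x i = x' i" by blast
    have "D' \<subseteq> D" using D'(1) by auto
    then show ?thesis using D'(2,3) by blast
  next
    assume L: "L \<in> leaves {x\<in>D. x i > Suc n} T"
    have h: "\<forall>x\<in>{x\<in>D. x i > Suc n}. x i = Suc (Suc n)"
    proof
      fix x assume "x \<in> {x\<in>D. x i > Suc n}"
      then have "x \<in> D" "x i > Suc n" by auto
      then show "x i = Suc (Suc n)" using Suc(3) by auto
    qed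
    have "\<forall>x\<in>{x\<in>D. x i > Suc n}. \<forall>x'\<in>{x\<in>D. x i > Suc n}. x i = x' i"
    proof (intro ballI)
      fix x x' assume "x \<in> {x\<in>D. x i > Suc n}" "x' \<in> {x\<in>D. x i > Suc n}"
      then show "x i = x' i" using h by metis
    qed
    moreover have "{x\<in>D. x i > Suc n} \<subseteq> D" by blast
    ultimately show ?thesis using L by blast
  qed
qed

lemma leaves_fullT:
  "L \<in> leaves D (fullT B is) \<Longrightarrow> D \<subseteq> grid d B \<Longrightarrow> set is \<subseteq> {1..d} \<Longrightarrow> 1 \<le> B \<Longrightarrow>
   \<forall>k\<in>set is. \<forall>x\<in>L. \<forall>x'\<in>L. x k = x' k"
proof (induct "is" arbitrary: D L)
  case Nil then show ?case by simp
next
  case (Cons i "is")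
  have i: "i \<in> {1..d}" using Cons(4) by simp
  have "D \<subseteq> {x. 1 \<le> x i \<and> x i \<le> Suc (B - 1)}"
  proof
    fix x assume "x \<in> D"
    then have "x \<in> grid d B" using Cons(3) by blast
    then have "1 \<le> x i" "x i \<le> B" using i unfolding grid_def by auto
    then show "x \<in> {x. 1 \<le> x i \<and> x i \<le> Suc (B - 1)}" using Cons(5) by auto
  qed
  moreover have L0: "L \<in> leaves D (cutN i (B - 1) (fullT B is))" using Cons(2) by simp
  ultimately obtain D' where D': "D' \<subseteq> D" "L \<in> leaves D' (fullT B is)" "\<forall>x\<in>D'. \<forall>x'\<in>D'. x i = x' i"
    using leaves_cutN[OF L0] by blast
  have IH: "\<forall>k\<in>set is. \<forall>x\<in>L. \<forall>x'\<in>L. x k = x' k"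
  proof (rule Cons(1)[OF D'(2)])
    show "D' \<subseteq> grid d B" using D'(1) Cons(3) by blast
    show "set is \<subseteq> {1..d}" using Cons(4) by simp
  qed (rule Cons(5))
  have "L \<subseteq> D'" using D'(2) by (rule leaves_sub)
  then have "\<forall>x\<in>L. \<forall>x'\<in>L. x i = x' i" using D'(3) by blast
  then show ?case using IH by simp
qed

lemma const_span:
  "(\<forall>L\<in>leaves C T. \<forall>x\<in>L. \<forall>x'\<in>L. g x = g x') \<Longrightarrow>
   (\<lambda>x. if x \<in> C then g x else 0) \<in> fsv.span ((\<lambda>A. indicator A) ` leaves C T)"
proof (induct T arbitrary: C)
  case Leaf
  show ?case
  proof (cases "C = {}")
    case True
    then have "(\<lambda>x. if x \<in> C then g x else 0) = 0" by (auto simp: fun_eq_iff)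
    then show ?thesis using fsv.span_zero by simp
  next
    case False
    then obtain c0 where c0: "c0 \<in> C" by blast
    have gc: "g x = g c0" if "x \<in> C" for x
      by (rule Leaf[rule_format, of C]) (use that c0 in simp_all)
    have "(\<lambda>x. if x \<in> C then g x else 0) = fscale (g c0) (indicator C)"
    proof
      fix x show "(if x \<in> C then g x else 0) = fscale (g c0) (indicator C) x"
        using gc[of x] by (simp add: fscale_apply indicator_def)
    qed
    moreover have "fscale (g c0) (indicator C) \<in> fsv.span ((\<lambda>A. indicator A) ` leaves C Leaf)"
      by (intro fsv.span_scale fsv.span_base) simp
    ultimately show ?thesis by simp
  qed
next
  case (Node v t L R)
  let ?S = "fsv.span ((\<lambda>A. indicator A) ` leaves C (Node v t L R))"
  have eq: "(\<lambda>x. if x \<in> C then g x else 0) = (\<lambda>x. if x \<in> {x\<in>C. x v \<le> t} then g x else 0) + (\<lambda>x. if x \<in> {x\<in>C. x v > t} then g x else 0)"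
    by (auto simp: fun_eq_iff)
  have subL: "fsv.span ((\<lambda>A. indicator A) ` leaves {x\<in>C. x v \<le> t} L) \<subseteq> ?S"
    by (rule fsv.span_mono) auto
  have subR: "fsv.span ((\<lambda>A. indicator A) ` leaves {x\<in>C. x v > t} R) \<subseteq> ?S"
    by (rule fsv.span_mono) auto
  have hL: "\<forall>L'\<in>leaves {x\<in>C. x v \<le> t} L. \<forall>x\<in>L'. \<forall>x'\<in>L'. g x = g x'"
  proof (intro ballI)
    fix L' x x' assume a: "L' \<in> leaves {x\<in>C. x v \<le> t} L" "x \<in> L'" "x' \<in> L'"
    show "g x = g x'" by (rule Node(3)[rule_format, of L']) (use a in simp_all)
  qed
  have hR: "\<forall>L'\<in>leaves {x\<in>C. x v > t} R. \<forall>x\<in>L'. \<forall>x'\<in>L'. g x = g x'"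
  proof (intro ballI)
    fix L' x x' assume a: "L' \<in> leaves {x\<in>C. x v > t} R" "x \<in> L'" "x' \<in> L'"
    show "g x = g x'" by (rule Node(3)[rule_format, of L']) (use a in simp_all)
  qed
  have "(\<lambda>x. if x \<in> {x\<in>C. x v \<le> t} then g x else 0) \<in> ?S" using Node(1)[OF hL] subL by blast
  moreover have "(\<lambda>x. if x \<in> {x\<in>C. x v > t} then g x else 0) \<in> ?S" using Node(2)[OF hR] subR by blast
  ultimately show ?case unfolding eq by (rule fsv.span_add)
qed

lemma exists_full:
  assumes "1 \<le> l" "m \<le> d" "1 \<le> B"
  shows "\<exists>E\<in>TSE d B l. restr d B (\<lambda>x. \<Sum>i=1..m. fs i (x i)) \<in> Fspace d B E"
proof -
  let ?T = "fullT B [1..<Suc m]"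
  have v: "valid_tree d (grid d B) ?T"
  proof (rule valid_fullT)
    show "set [1..<Suc m] \<subseteq> {1..d}" using assms by auto
    show "grid d B \<noteq> {}" using grid_ne[OF assms(3)] by blast
    show "\<forall>k\<in>set [1..<Suc m]. \<forall>x\<in>grid d B. \<forall>c\<in>{1..B}. x(k:=c) \<in> grid d B"
      using assms(2) unfolding grid_def by auto
  qed auto
  have c: "\<forall>L\<in>leaves (grid d B) ?T. \<forall>x\<in>L. \<forall>x'\<in>L. (\<Sum>i=1..m. fs i (x i)) = (\<Sum>i=1..m. fs i (x' i))"
  proof (intro ballI)
    fix L x x' assume L: "L \<in> leaves (grid d B) ?T" and x: "x \<in> L" and x': "x' \<in> L"
    have "\<forall>k\<in>set [1..<Suc m]. \<forall>x\<in>L. \<forall>x'\<in>L. x k = x' k"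
      by (rule leaves_fullT[OF L order_refl]) (use assms in auto)
    then have "\<forall>k\<in>{1..m}. x k = x' k" using x x' by auto
    then show "(\<Sum>i=1..m. fs i (x i)) = (\<Sum>i=1..m. fs i (x' i))" by (intro sum.cong) auto
  qed
  have "restr d B (\<lambda>x. \<Sum>i=1..m. fs i (x i)) \<in> fsv.span ((\<lambda>A. indicator A) ` leaves (grid d B) ?T)"
    unfolding restr_def by (rule const_span[OF c])
  moreover have "fsv.span ((\<lambda>A. indicator A) ` leaves (grid d B) ?T) \<subseteq> Fspace d B (replicate l ?T)"
    unfolding Fspace_def by (rule fsv.span_mono) (use assms(1) in auto)
  moreover have "replicate l ?T \<in> TSE d B l" unfolding TSE_def using v by auto
  ultimately show ?thesis by blast
qed



lemma nodes_Node_cases: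
  "(a,v,t) \<in> nodes C (Node v0 t0 L R) \<Longrightarrow> (a = [] \<and> v = v0) \<or> (\<exists>s a'. a = (v0,t0,s)#a')"
  by auto

lemma two_coords:
  assumes "(a1,v1,t1) \<in> nodes C T" "(a2,v2,t2) \<in> nodes C T" "v1 \<noteq> v2"
  shows "\<exists>a v t v' t' s. (a,v,t) \<in> nodes C T \<and> (v',t',s) \<in> set a \<and> v' \<noteq> v"
proof (cases T)
  case Leaf then show ?thesis using assms by simp
next
  case (Node v0 t0 L R)
  have key: "\<exists>v' t' s. (v',t',s) \<in> set a \<and> v' \<noteq> v" if "(a,v,t) \<in> nodes C T" "v \<noteq> v0" for a v t
  proof -
    from nodes_Node_cases[of a v t C v0 t0 L R] that obtain s a' where "a = (v0,t0,s)#a'" unfolding Node by blast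
    then show ?thesis using that(2) by auto
  qed
  show ?thesis
  proof (cases "v1 = v0")
    case True
    then have "v2 \<noteq> v0" using assms(3) by simp
    then show ?thesis using key[OF assms(2)] assms(2) by blast
  next
    case False
    then show ?thesis using key[OF assms(1)] assms(1) by blast
  qed
qed

lemma strict_main:
  assumes E: "E \<in> TSE d B l" "1 \<le> l" "l < m" and md: "m \<le> d" and B: "1 \<le> B"
    and ne: "\<forall>i\<in>{1..m}. Kb fs B i \<noteq> {}"
    and F: "restr d B (\<lambda>x. \<Sum>i\<in>{1..m}. fs i (x i)) \<in> Fspace d B E"
  shows "2 + card (KI fs B {1..m}) \<le> df d B E"
proof -
  have valid: "\<forall>T\<in>set E. valid_tree d (grid d B) T" and lenE: "length E = l" using E unfolding TSE_def by auto
  have neE: "E \<noteq> []" using lenE E(2) by auto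
  have I: "{1..m} \<subseteq> {1..d}" "finite {1..m}" using md by auto
  have KS: "KI fs B {1..m} \<subseteq> SP d B E" by (rule KI_sub_SP[OF I F])
  show ?thesis
  proof (cases "KI fs B {1..m} = SP d B E")
    case False
    then have "card (KI fs B {1..m}) < card (SP d B E)" using KS SP_finite psubset_card_mono by blast
    then show ?thesis using lower_basic[OF valid neE B] by simp
  next
    case True
    have ex: "\<exists>T. T \<in> set E \<and> (\<exists>a t. (a,i,t) \<in> nodes (grid d B) T)" if i: "i \<in> {1..m}" for i
    proof -
      obtain b where b: "b \<in> Kb fs B i" using ne i by blast
      then have "(i,b) \<in> SP d B E" using True i unfolding KI_def by blast
      then obtain x where x: "x \<in> allnodes d B E" "(i,b) = (\<lambda>(T,a,v,t). (v,t)) x" unfolding SP_def spN_def by blast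
      obtain T a v t where "x = (T,a,v,t)" by (cases x)
      then show ?thesis using x unfolding allnodes_def by auto
    qed
    define tau where "tau i = (SOME T. T \<in> set E \<and> (\<exists>a t. (a,i,t) \<in> nodes (grid d B) T))" for i
    have tau: "tau i \<in> set E \<and> (\<exists>a t. (a,i,t) \<in> nodes (grid d B) (tau i))" if "i \<in> {1..m}" for i
      unfolding tau_def by (rule someI_ex[OF ex[OF that]])
    have "\<not> inj_on tau {1..m}"
    proof
      assume inj: "inj_on tau {1..m}"
      have "card {1..m} \<le> card (set E)" by (rule card_inj_on_le[OF inj]) (use tau in auto)
      also have "\<dots> \<le> length E" by (rule card_length)
      finally show False using lenE E(3) by simp
    qed
    then obtain i1 i2 where ii: "i1 \<in> {1..m}" "i2 \<in> {1..m}" "i1 \<noteq> i2" "tau i1 = tau i2"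
      unfolding inj_on_def by blast
    obtain a1 t1 where n1: "(a1,i1,t1) \<in> nodes (grid d B) (tau i1)" using tau[OF ii(1)] by blast
    obtain a2 t2 where n2: "(a2,i2,t2) \<in> nodes (grid d B) (tau i1)" using tau[OF ii(2)] ii(4) by auto
    obtain a v t v' t' s where M: "(a,v,t) \<in> nodes (grid d B) (tau i1)" "(v',t',s) \<in> set a" "v' \<noteq> v"
      using two_coords[OF n1 n2 ii(3)] by blast
    have Mall: "(tau i1, a, v, t) \<in> allnodes d B E" using M(1) tau[OF ii(1)] unfolding allnodes_def by auto
    have "(v,t) \<in> SP d B E" unfolding SP_def spN_def by (rule image_eqI[OF _ Mall]) simp
    then have "(v,t) \<in> KI fs B {1..m}" using True by simp
    then have vt: "v \<in> {1..m}" "t \<in> Kb fs B v" unfolding KI_def by auto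
    have jumps: "\<forall>y. loc d B v t y \<longrightarrow> restr d B (\<lambda>x. \<Sum>i\<in>{1..m}. fs i (x i)) y \<noteq> restr d B (\<lambda>x. \<Sum>i\<in>{1..m}. fs i (x i)) (y(v:=Suc t))"
    proof (intro allI impI)
      fix y assume ly: "loc d B v t y"
      have "fs v t \<noteq> fs v (Suc t)" using vt(2) unfolding Kb_def by simp
      then show "restr d B (\<lambda>x. \<Sum>i\<in>{1..m}. fs i (x i)) y \<noteq> restr d B (\<lambda>x. \<Sum>i\<in>{1..m}. fs i (x i)) (y(v:=Suc t))"
        using jump_gI[OF I(2) vt(1) ly, of fs] by auto
    qed
    have "2 + card (SP d B E) \<le> df d B E"
      by (rule lower_strict[OF valid neE B Mall M(2) M(3) F jumps])
    then show ?thesis using True by simp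
  qed
qed

lemma Kb_ne:
  assumes "a \<in> {1..B}" "b \<in> {1..B}" "fs i a \<noteq> fs i b"
  shows "Kb fs B i \<noteq> {}"
proof
  assume e: "Kb fs B i = {}"
  have "\<forall>c. 1 \<le> c \<longrightarrow> c \<le> B \<longrightarrow> fs i c = fs i 1"
  proof (intro allI)
    fix c show "1 \<le> c \<longrightarrow> c \<le> B \<longrightarrow> fs i c = fs i 1"
    proof (induct c)
      case 0 then show ?case by simp
    next
      case (Suc c)
      show ?case
      proof (intro impI)
        assume c: "1 \<le> Suc c" "Suc c \<le> B"
        show "fs i (Suc c) = fs i 1"
        proof (cases "c = 0")
          case True then show ?thesis by simp
        next
          case False
          then have "c \<in> {1..<B}" using c by auto
          then have "fs i c = fs i (Suc c)" using e unfolding Kb_def by blast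
          moreover have "fs i c = fs i 1" using Suc False c by simp
          ultimately show ?thesis by simp
        qed
      qed
    qed
  qed
  then have h: "\<And>c. 1 \<le> c \<Longrightarrow> c \<le> B \<Longrightarrow> fs i c = fs i 1" by blast
  have "fs i a = fs i 1" by (rule h) (use assms(1) in auto)
  moreover have "fs i b = fs i 1" by (rule h) (use assms(2) in auto)
  ultimately
  show False using assms(3) by simp
qed



theorem propositionF7:
  fixes d B m :: nat and fs :: "nat \<Rightarrow> nat \<Rightarrow> real"
  assumes "1 \<le> m" and "m \<le> d"
    and "\<forall>i\<in>{1..m}. \<exists>a\<in>{1..B}. \<exists>b\<in>{1..B}. fs i a \<noteq> fs i b"
  defines "fstar \<equiv> (\<lambda>x. \<Sum>i=1..m. fs i (x i))"
  shows "(\<forall>l. 1 \<le> l \<and> l < m \<longrightarrow> dimL d B l fstar > dimL d B m fstar)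
    \<and> (\<forall>l\<ge>m. dimL d B l fstar = dimL d B m fstar
         \<and> int (dimL d B m fstar) = (\<Sum>i=1..m. int (dimL d B 1 (\<lambda>x. fs i (x i)))) - int m + 1)"
proof -
  have "1 \<in> {1..m}" using assms(1) by simp
  then obtain a0 where "a0 \<in> {1..B}" using assms(3) by blast
  then have B: "1 \<le> B" by simp
  have ne: "\<forall>i\<in>{1..m}. Kb fs B i \<noteq> {}"
  proof
    fix i assume "i \<in> {1..m}"
    then obtain a b where "a \<in> {1..B}" "b \<in> {1..B}" "fs i a \<noteq> fs i b" using assms(3) by blast
    then show "Kb fs B i \<noteq> {}" by (rule Kb_ne)
  qed
  have I: "{1..m} \<subseteq> {1..d}" "finite {1..m}" "{1..m} \<noteq> {}" using assms(1,2) by auto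
  have dl: "dimL d B l fstar = 1 + card (KI fs B {1..m})" if "m \<le> l" for l
    unfolding fstar_def by (rule dimL_I[OF I _ B]) (use that in simp)
  have dm: "dimL d B m fstar = 1 + card (KI fs B {1..m})" using dl by simp
  have d1: "dimL d B 1 (\<lambda>x. fs i (x i)) = 1 + card (Kb fs B i)" if "i \<in> {1..m}" for i
  proof -
    have "(\<lambda>x. fs i (x i)) = (\<lambda>x. \<Sum>k\<in>{i}. fs k (x k))" by simp
    moreover have "dimL d B 1 (\<lambda>x. \<Sum>k\<in>{i}. fs k (x k)) = 1 + card (KI fs B {i})"
      by (rule dimL_I) (use that assms(2) B in auto)
    moreover have "card (KI fs B {i}) = card (Kb fs B i)" unfolding KI_def using finite_Kb by simp
    ultimately show ?thesis by simp
  qed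
  have cK: "card (KI fs B {1..m}) = (\<Sum>i=1..m. card (Kb fs B i))"
    unfolding KI_def using finite_Kb by simp
  have part2: "\<forall>l\<ge>m. dimL d B l fstar = dimL d B m fstar
         \<and> int (dimL d B m fstar) = (\<Sum>i=1..m. int (dimL d B 1 (\<lambda>x. fs i (x i)))) - int m + 1"
  proof (intro allI impI conjI)
    fix l assume "m \<le> l"
    then show "dimL d B l fstar = dimL d B m fstar" using dl dm by simp
  next
    have "(\<Sum>i=1..m. int (dimL d B 1 (\<lambda>x. fs i (x i)))) = (\<Sum>i=1..m. 1 + int (card (Kb fs B i)))"
    proof (rule sum.cong[OF refl])
      fix i assume "i \<in> {1..m}"
      from d1[OF this] show "int (dimL d B 1 (\<lambda>x. fs i (x i))) = 1 + int (card (Kb fs B i))" by simp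
    qed
    also have "\<dots> = int m + (\<Sum>i=1..m. int (card (Kb fs B i)))" by (simp add: sum.distrib)
    finally show "int (dimL d B m fstar) = (\<Sum>i=1..m. int (dimL d B 1 (\<lambda>x. fs i (x i)))) - int m + 1"
      using dm cK by (simp add: of_nat_sum)
  qed
  have part1: "\<forall>l. 1 \<le> l \<and> l < m \<longrightarrow> dimL d B l fstar > dimL d B m fstar"
  proof (intro allI impI)
    fix l assume l: "1 \<le> l \<and> l < m"
    let ?P = "\<lambda>n. \<exists>E\<in>TSE d B l. (\<lambda>x. if x \<in> grid d B then fstar x else 0) \<in> Fspace d B E \<and> df d B E = n"
    obtain E0 where E0: "E0 \<in> TSE d B l" "restr d B (\<lambda>x. \<Sum>i=1..m. fs i (x i)) \<in> Fspace d B E0"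
      using exists_full[of l m d B fs] l assms(2) B by blast
    have "?P (df d B E0)" using E0 unfolding restr_def fstar_def by blast
    then have "?P (LEAST n. ?P n)" by (rule LeastI)
    then obtain E where E: "E \<in> TSE d B l" "(\<lambda>x. if x \<in> grid d B then fstar x else 0) \<in> Fspace d B E"
      "df d B E = (LEAST n. ?P n)" by blast
    have E2: "restr d B (\<lambda>x. \<Sum>i\<in>{1..m}. fs i (x i)) \<in> Fspace d B E"
      using E(2) unfolding restr_def fstar_def .
    have "2 + card (KI fs B {1..m}) \<le> df d B E"
      by (rule strict_main[OF E(1) _ _ assms(2) B ne E2]) (use l in auto)
    then have "2 + card (KI fs B {1..m}) \<le> dimL d B l fstar" using E(3) unfolding dimL_def by simp
    then show "dimL d B l fstar > dimL d B m fstar" using dm by simp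
  qed
  show ?thesis using part1 part2 by blast
qed


end
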